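(* (1) Let $\mu\in(\mathbb Z^n_{\ge0})_+$ and $n\ge b\ge a\ge\ell(\mu)$. Let $E\in B(\varpi_a)$, $F\in B(\varpi_b)$ with $E\otimes T^0_\mu$ semistandard, and let $j\in[n-1]$ with $j\notin E$, $j+1\in E$. Then $$\Psi_{F\otimes E\otimes T^0_\mu}=\begin{cases}tT_j^{-1}\Psi_{s_jF\otimes s_jE\otimes T^0_\mu},& s_jF\le F,\\ T_j\Psi_{s_jF\otimes s_jE\otimes T^0_\mu}+(1-t)\Psi_{F\otimes s_jE\otimes T^0_\mu},& s_jF\ge F.\end{cases}$$ (2) Let $n\ge b\ge a\ge1$, $E\in B(\varpi_a)$, $F\in B(\varpi_b)$, and $j\in[n-1]$ with $s_jE\le E$. Then $$\Psi_{F\otimes E}=\begin{cases}tT_j^{-1}\Psi_{s_jF\otimes s_jE},& s_jF\le F,\\ T_j\Psi_{s_jF\otimes s_jE}+(1-t)\Psi_{F\otimes s_jE},& s_jF\ge F.\end{cases}$$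
   Context: Fix $n\ge1$, $[n]=\{1,\dots,n\}$. $S_n$ with simple transpositions $s_i$ and length $\ell(\cdot)$ acts on $\mathbb Z^n$ by permuting coordinates; $\varpi_k=\varepsilon_1+\dots+\varepsilon_k$. $(\mathbb Z^n_{\ge0})_+=\{\mu\in\mathbb Z^n_{\ge0}:\mu_1\ge\dots\ge\mu_n\}$, $\ell(\mu)$ = number of nonzero parts; $S_{n,\lambda}$ the stabilizer. The affine Hecke algebra $H$ is the $\mathbb Z[t^{\pm1}]$-algebra with generators $T_1,\dots,T_{n-1},X_1^{\pm1},\dots,X_n^{\pm1}$ and relations $T_i^2=(t-1)T_i+t$, $T_iT_{i+1}T_i=T_{i+1}T_iT_{i+1}$, $T_iT_j=T_jT_i$ ($|i-j|>1$), $X_iX_j=X_jX_i$, $T_iX_iT_i=tX_{i+1}$, $T_iX_j=X_jT_i$ ($j\notin\{i,i+1\}$). $T_w$ via reduced words; $H_n=\mathrm{span}\{T_w\}$, $H_{n,\lambda}=\mathrm{span}\{T_w:w\in S_{n,\lambda}\}$, $\mathbf 1_\lambda=\sum_{w\in S_{n,\lambda}}T_w$. Columns: $B(\varpi_\ell)$ is the set of $C=(c_1<\dots<c_\ell)\subseteq[n]$; order $E\le F$ iff $e_i\le f_i$ for all $i$; $s_jC$ is the column whose underlying set is the image of $C$ under $(j,j+1)$; $u_C\in S_n$ sends $k\mapsto c_k$ ($k\le\ell$) and $\ell+1,\dots,n$ increasingly onto $[n]\setminus C$. Tensors of columns with weakly decreasing lengths from left to right are fillings of Young diagrams; semistandard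 means rows weakly increase left to right. $T^0_\mu$ is the tableau of shape $\mu$ with row $i$ filled by $i$. $\Psi$: each $h\in H_n$ is uniquely $\sum_{F\in B(\varpi_\ell)}T_{u_F}h_F$, $h_F\in H_{n,\varpi_\ell}$. $\Psi_C=t^{\ell(u_C)}(T_{u_C^{-1}})^{-1}\mathbf 1_{\varpi_\ell}$ for $C\in B(\varpi_\ell)$; for $T=C\otimes S$ ($C\in B(\varpi_\ell)$, $S$ with columns of length $\le\ell$), write $\Psi_S=\sum_ET_{u_E}h_{E,S}$ ($h_{E,S}\in H_{n,\varpi_\ell}$) and set $\Psi_T=t^{\ell(u_C)}(T_{u_C^{-1}})^{-1}h_{C,S}$. *)

theory Defs
  imports "HOL-Combinatorics.Combinatorics"
begin

(* Permutations of [n] are functions nat => nat permuting {1..n} (fixing everything else).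
   Elements of the finite Hecke algebra H_n over a commutative ring with an invertible
   parameter t are coefficient functions h : perm => 'a, h = sum_w h(w) T_w,
   supported on S_n. *)

type_synonym perm = "nat \<Rightarrow> nat"
type_synonym 'a hecke = "perm \<Rightarrow> 'a"

definition Sn :: "nat \<Rightarrow> perm set" where
  "Sn n = {w. w permutes {1..n}}"

definition sref :: "nat \<Rightarrow> perm" where
  "sref i = Transposition.transpose i (Suc i)"

definition plen :: "nat \<Rightarrow> perm \<Rightarrow> nat" where
  "plen n w = card {(i, j). 1 \<le> i \<and> i < j \<and> j \<le> n \<and> w j < w i}"

definition redword :: "nat \<Rightarrow> perm \<Rightarrow> nat list" where
  "redword n w = (SOME is. set is \<subseteq> {1..<n} \<and> length is = plen n w \<and>
                     foldr (\<lambda>i f. sref i \<circ> f) is id = w)"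

definition hT :: "perm \<Rightarrow> 'a::comm_ring_1 hecke" where
  "hT w = (\<lambda>u. if u = w then 1 else 0)"

definition hone :: "'a::comm_ring_1 hecke" where
  "hone = hT id"

definition Hn :: "nat \<Rightarrow> 'a::comm_ring_1 hecke set" where
  "Hn n = {h. \<forall>w. w \<notin> Sn n \<longrightarrow> h w = 0}"

(* left multiplication by T_{s_i}:
   T_i T_u = T_{s_i u} if l(s_i u) > l(u), and (t-1) T_u + t T_{s_i u} otherwise *)
definition hgen :: "nat \<Rightarrow> 'a::comm_ring_1 \<Rightarrow> nat \<Rightarrow> 'a hecke \<Rightarrow> 'a hecke" where
  "hgen n t i v = (\<lambda>w. if plen n (sref i \<circ> w) < plen n w
                        then v (sref i \<circ> w) + (t - 1) * v w
                        else t * v (sref i \<circ> w))"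

definition hop :: "nat \<Rightarrow> 'a::comm_ring_1 \<Rightarrow> perm \<Rightarrow> 'a hecke \<Rightarrow> 'a hecke" where
  "hop n t w v = foldr (hgen n t) (redword n w) v"

definition hmul :: "nat \<Rightarrow> 'a::comm_ring_1 \<Rightarrow> 'a hecke \<Rightarrow> 'a hecke \<Rightarrow> 'a hecke" where
  "hmul n t h v = (\<lambda>x. \<Sum>w\<in>Sn n. h w * hop n t w v x)"

definition hinv :: "nat \<Rightarrow> 'a::comm_ring_1 \<Rightarrow> 'a hecke \<Rightarrow> 'a hecke" where
  "hinv n t h = (THE g. g \<in> Hn n \<and> hmul n t h g = hone \<and> hmul n t g h = hone)"

(* stabilizer S_{n,varpi_l} of varpi_l = e_1 + ... + e_l *)
definition Stab :: "nat \<Rightarrow> nat \<Rightarrow> perm set" where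
  "Stab n l = {w \<in> Sn n. w ` {1..l} = {1..l}}"

definition Hsub :: "nat \<Rightarrow> nat \<Rightarrow> 'a::comm_ring_1 hecke set" where
  "Hsub n l = {h. \<forall>w. w \<notin> Stab n l \<longrightarrow> h w = 0}"

definition one_l :: "nat \<Rightarrow> nat \<Rightarrow> 'a::comm_ring_1 hecke" where
  "one_l n l = (\<lambda>w. if w \<in> Stab n l then 1 else 0)"

(* columns: B(varpi_l), a column C = (c_1 < ... < c_l) is a strictly increasing list *)
definition cols :: "nat \<Rightarrow> nat \<Rightarrow> nat list set" where
  "cols n l = {C. sorted_wrt (<) C \<and> length C = l \<and> set C \<subseteq> {1..n}}"

definition cle :: "nat list \<Rightarrow> nat list \<Rightarrow> bool" where
  "cle E F \<longleftrightarrow> length E = length F \<and> (\<forall>i<length E. E ! i \<le> F ! i)"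

definition scol :: "nat \<Rightarrow> nat list \<Rightarrow> nat list" where
  "scol j C = sorted_list_of_set (sref j ` set C)"

definition ucol :: "nat \<Rightarrow> nat list \<Rightarrow> perm" where
  "ucol n C = (\<lambda>k. if 1 \<le> k \<and> k \<le> length C then C ! (k - 1)
                   else if length C < k \<and> k \<le> n
                   then sorted_list_of_set ({1..n} - set C) ! (k - length C - 1)
                   else k)"

definition hdec :: "nat \<Rightarrow> 'a::comm_ring_1 \<Rightarrow> nat \<Rightarrow> 'a hecke \<Rightarrow> nat list \<Rightarrow> 'a hecke" where
  "hdec n t l h = (THE f. (\<forall>F. F \<notin> cols n l \<longrightarrow> f F = (\<lambda>_. 0)) \<and>
                          (\<forall>F\<in>cols n l. f F \<in> Hsub n l) \<and>
                          (\<forall>x. h x = (\<Sum>F\<in>cols n l. hmul n t (hT (ucol n F)) (f F) x)))"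

(* Psi on tensors of columns C_1 (x) C_2 (x) ... (x) C_m (lists of columns, leftmost first) *)
fun Psi :: "nat \<Rightarrow> 'a::comm_ring_1 \<Rightarrow> nat list list \<Rightarrow> 'a hecke" where
  "Psi n t [] = (\<lambda>_. 0)"
| "Psi n t [C] = (\<lambda>x. t ^ plen n (ucol n C) *
      hmul n t (hinv n t (hT (inv (ucol n C)))) (one_l n (length C)) x)"
| "Psi n t (C # D # S) = (\<lambda>x. t ^ plen n (ucol n C) *
      hmul n t (hinv n t (hT (inv (ucol n C)))) (hdec n t (length C) (Psi n t (D # S)) C) x)"

definition dominant :: "nat \<Rightarrow> nat list \<Rightarrow> bool" where
  "dominant n mu \<longleftrightarrow> length mu = n \<and> sorted_wrt (\<ge>) mu"

definition lenpart :: "nat list \<Rightarrow> nat" where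
  "lenpart mu = length (filter (\<lambda>x. x \<noteq> 0) mu)"

(* T^0_mu as a list of columns: column k = {1, ..., mu'_k} *)
definition T0 :: "nat \<Rightarrow> nat list \<Rightarrow> nat list list" where
  "T0 n mu = map (\<lambda>k. [1..<Suc (card {i. i < n \<and> k \<le> mu ! i})])
                 [1..<Suc (Max (insert 0 (set mu)))]"

definition semistandard :: "nat list list \<Rightarrow> bool" where
  "semistandard cs \<longleftrightarrow> (\<forall>k. Suc k < length cs \<longrightarrow>
      length (cs ! Suc k) \<le> length (cs ! k) \<and>
      (\<forall>r < length (cs ! Suc k). cs ! k ! r \<le> cs ! Suc k ! r))"

end

theory Submission
  imports Defs
begin


definition Inv :: "nat \<Rightarrow> perm \<Rightarrow> (nat \<times> nat) set" where
  "Inv n w = {(i, j). 1 \<le> i \<and> i < j \<and> j \<le> n \<and> w j < w i}"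

lemma plen_Inv: "plen n w = card (Inv n w)"
  unfolding plen_def Inv_def by simp

lemma Inv_sub: "Inv n w \<subseteq> {1..n} \<times> {1..n}"
  unfolding Inv_def by auto

lemma finite_Inv[simp]: "finite (Inv n w)"
  by (rule finite_subset[OF Inv_sub]) auto

lemma sref_permutes: "1 \<le> i \<Longrightarrow> i < n \<Longrightarrow> sref i permutes {1..n}"
  unfolding sref_def by (rule permutes_swap_id) auto

lemma sref_sref[simp]: "sref i \<circ> sref i = id"
  unfolding sref_def by simp

lemma sref_sref_app[simp]: "sref i (sref i x) = x"
  unfolding sref_def by simp

lemma inv_sref[simp]: "inv (sref i) = sref i"
  unfolding sref_def by simp

lemma sref_less:
  assumes "x \<noteq> y"
  shows "(sref i x < sref i y) = (if x = i \<and> y = Suc i then False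
        else if x = Suc i \<and> y = i then True else x < y)"
  using assms unfolding sref_def transpose_def by auto

lemma Sn_iff: "w \<in> Sn n \<longleftrightarrow> w permutes {1..n}"
  unfolding Sn_def by simp

lemma plen_inv:
  assumes w: "w permutes {1..n}"
  shows "plen n (inv w) = plen n w"
proof -
  have winv: "inv w permutes {1..n}" using w by (rule permutes_inv)
  have iw: "\<And>x. inv w (w x) = x" "\<And>x. w (inv w x) = x"
    using permutes_inverses[OF w] by auto
  have rng: "\<And>x. x \<in> {1..n} \<Longrightarrow> w x \<in> {1..n}" "\<And>x. x \<in> {1..n} \<Longrightarrow> inv w x \<in> {1..n}"
    using permutes_in_image[OF w] permutes_in_image[OF winv] by auto
  have "bij_betw (\<lambda>(p, q). (w q, w p)) (Inv n w) (Inv n (inv w))"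
  proof (rule bij_betw_byWitness[where f' = "\<lambda>(a, b). (inv w b, inv w a)"])
    show "\<forall>a\<in>Inv n w. (\<lambda>(a, b). (inv w b, inv w a)) ((\<lambda>(p, q). (w q, w p)) a) = a"
      using iw by auto
    show "\<forall>a'\<in>Inv n (inv w). (\<lambda>(p, q). (w q, w p)) ((\<lambda>(a, b). (inv w b, inv w a)) a') = a'"
      using iw by auto
    show "(\<lambda>(p, q). (w q, w p)) ` Inv n w \<subseteq> Inv n (inv w)"
    proof
      fix z assume "z \<in> (\<lambda>(p, q). (w q, w p)) ` Inv n w"
      then obtain p q where z: "z = (w q, w p)" and pq: "1 \<le> p" "p < q" "q \<le> n" "w q < w p"
        unfolding Inv_def by auto
      have "w q \<in> {1..n}" "w p \<in> {1..n}" using rng pq by auto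
      then show "z \<in> Inv n (inv w)" using z pq iw unfolding Inv_def by auto
    qed
    show "(\<lambda>(a, b). (inv w b, inv w a)) ` Inv n (inv w) \<subseteq> Inv n w"
    proof
      fix z assume "z \<in> (\<lambda>(a, b). (inv w b, inv w a)) ` Inv n (inv w)"
      then obtain p q where z: "z = (inv w q, inv w p)" and pq: "1 \<le> p" "p < q" "q \<le> n" "inv w q < inv w p"
        unfolding Inv_def by auto
      have "inv w q \<in> {1..n}" "inv w p \<in> {1..n}" using rng pq by auto
      then show "z \<in> Inv n w" using z pq iw unfolding Inv_def by auto
    qed
  qed
  then show ?thesis unfolding plen_Inv by (simp add: bij_betw_same_card)
qed


definition Dl :: "nat \<Rightarrow> perm \<Rightarrow> bool" where
  "Dl i w \<longleftrightarrow> inv w (Suc i) < inv w i"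

lemma Inv_sref_left:
  assumes w: "w permutes {1..n}" and i: "1 \<le> i" "i < n"
  shows "Inv n (sref i \<circ> w) = (if Dl i w then Inv n w - {(inv w (Suc i), inv w i)}
            else insert (inv w i, inv w (Suc i)) (Inv n w))"
    and "Dl i w \<Longrightarrow> (inv w (Suc i), inv w i) \<in> Inv n w"
    and "\<not> Dl i w \<Longrightarrow> (inv w i, inv w (Suc i)) \<notin> Inv n w"
proof -
  have winv: "inv w permutes {1..n}" using w by (rule permutes_inv)
  have iw: "\<And>x. inv w (w x) = x" "\<And>x. w (inv w x) = x"
    using permutes_inverses[OF w] by auto
  have rng: "\<And>x. x \<in> {1..n} \<Longrightarrow> inv w x \<in> {1..n}"
    using permutes_in_image[OF winv] by auto
  define P where "P = inv w i"
  define Q where "Q = inv w (Suc i)"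
  have PQ: "P \<in> {1..n}" "Q \<in> {1..n}" "P \<noteq> Q" "w P = i" "w Q = Suc i"
    using rng i iw unfolding P_def Q_def by (auto, metis n_not_Suc_n)
  have injw: "\<And>x y. w x = w y \<Longrightarrow> x = y" by (metis iw(1))
  have key: "\<And>p q. p < q \<Longrightarrow> (p, q) \<in> Inv n (sref i \<circ> w) \<longleftrightarrow>
      1 \<le> p \<and> q \<le> n \<and> (if q = P \<and> p = Q then False else if q = Q \<and> p = P then True else w q < w p)"
  proof -
    fix p q :: nat assume pq: "p < q"
    have ne: "w q \<noteq> w p" using pq injw by fastforce
    show "?thesis p q" unfolding Inv_def using sref_less[OF ne, of i] PQ injw pq
      by (auto simp: iw)
  qed
  have DlPQ: "Dl i w \<longleftrightarrow> Q < P" unfolding Dl_def P_def Q_def ..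
  show "Inv n (sref i \<circ> w) = (if Dl i w then Inv n w - {(inv w (Suc i), inv w i)}
            else insert (inv w i, inv w (Suc i)) (Inv n w))"
  proof (cases "Dl i w")
    case True
    then have "Q < P" using DlPQ by simp
    have "Inv n (sref i \<circ> w) = Inv n w - {(Q, P)}"
    proof (rule set_eqI)
      fix z show "z \<in> Inv n (sref i \<circ> w) \<longleftrightarrow> z \<in> Inv n w - {(Q, P)}"
      proof (cases z)
        case (Pair p q)
        show ?thesis
        proof (cases "p < q")
          case True
          then show ?thesis using key[OF True] PQ \<open>Q < P\<close> unfolding Pair Inv_def by auto
        next
          case False
          then show ?thesis unfolding Pair Inv_def by auto
        qed
      qed
    qed
    then show ?thesis using True unfolding P_def Q_def by simp
  next
    case False
    then have "P < Q" using DlPQ PQ by simp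
    have "Inv n (sref i \<circ> w) = insert (P, Q) (Inv n w)"
    proof (rule set_eqI)
      fix z show "z \<in> Inv n (sref i \<circ> w) \<longleftrightarrow> z \<in> insert (P, Q) (Inv n w)"
      proof (cases z)
        case (Pair p q)
        show ?thesis
        proof (cases "p < q")
          case True
          then show ?thesis using key[OF True] PQ \<open>P < Q\<close> unfolding Pair Inv_def by auto
        next
          case False
          then show ?thesis using \<open>P < Q\<close> unfolding Pair Inv_def by auto
        qed
      qed
    qed
    then show ?thesis using False unfolding P_def Q_def by simp
  qed
  show "Dl i w \<Longrightarrow> (inv w (Suc i), inv w i) \<in> Inv n w"
    using PQ DlPQ unfolding Inv_def P_def[symmetric] Q_def[symmetric] by auto
  show "\<not> Dl i w \<Longrightarrow> (inv w i, inv w (Suc i)) \<notin> Inv n w"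
    using PQ DlPQ unfolding Inv_def P_def[symmetric] Q_def[symmetric] by auto
qed

lemma plen_sref_left:
  assumes w: "w permutes {1..n}" and i: "1 \<le> i" "i < n"
  shows "plen n (sref i \<circ> w) = (if Dl i w then plen n w - 1 else Suc (plen n w))"
    and "Dl i w \<Longrightarrow> plen n w \<ge> 1"
proof -
  note I = Inv_sref_left[OF w i]
  show "plen n (sref i \<circ> w) = (if Dl i w then plen n w - 1 else Suc (plen n w))"
    unfolding plen_Inv I(1) using I(2,3) by (auto simp: card_Diff_singleton card_insert_if)
  show "Dl i w \<Longrightarrow> plen n w \<ge> 1"
    unfolding plen_Inv using I(2) by (metis One_nat_def Suc_leI card_gt_0_iff empty_iff finite_Inv)
qed

lemma plen_sref_left_lt:
  assumes w: "w permutes {1..n}" and i: "1 \<le> i" "i < n"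
  shows "plen n (sref i \<circ> w) < plen n w \<longleftrightarrow> Dl i w"
  using plen_sref_left[OF assms] by auto

definition Dr :: "nat \<Rightarrow> perm \<Rightarrow> bool" where
  "Dr i w \<longleftrightarrow> w (Suc i) < w i"

lemma Dl_inv: "w permutes S \<Longrightarrow> Dl i (inv w) \<longleftrightarrow> Dr i w"
  unfolding Dl_def Dr_def by (simp add: permutes_inv_inv)

lemma inv_comp_sref: "w permutes {1..n} \<Longrightarrow> inv (w \<circ> sref i) = sref i \<circ> inv w"
  by (metis inv_sref o_inv_distrib permutes_bij sref_def bij_transpose)

lemma plen_sref_right:
  assumes w: "w permutes {1..n}" and i: "1 \<le> i" "i < n"
  shows "plen n (w \<circ> sref i) = (if Dr i w then plen n w - 1 else Suc (plen n w))"
    and "Dr i w \<Longrightarrow> plen n w \<ge> 1"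
proof -
  have winv: "inv w permutes {1..n}" using w by (rule permutes_inv)
  have c: "w \<circ> sref i permutes {1..n}" using permutes_compose[OF sref_permutes[OF i] w] .
  have "plen n (w \<circ> sref i) = plen n (inv (w \<circ> sref i))" using plen_inv[OF c] by simp
  also have "\<dots> = plen n (sref i \<circ> inv w)" using inv_comp_sref[OF w] by simp
  also have "\<dots> = (if Dr i w then plen n w - 1 else Suc (plen n w))"
    using plen_sref_left(1)[OF winv i] Dl_inv[OF w] plen_inv[OF w] by simp
  finally show "plen n (w \<circ> sref i) = (if Dr i w then plen n w - 1 else Suc (plen n w))" .
  show "Dr i w \<Longrightarrow> plen n w \<ge> 1"
    using plen_sref_left(2)[OF winv i] Dl_inv[OF w] plen_inv[OF w] by simp
qed


lemma incr_bij_id: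
  assumes w: "w permutes {1..n}" and inc: "\<And>k. 1 \<le> k \<Longrightarrow> k < n \<Longrightarrow> w k < w (Suc k)"
  shows "w = id"
proof -
  have rng: "\<And>x. x \<in> {1..n} \<Longrightarrow> w x \<in> {1..n}" using permutes_in_image[OF w] by auto
  have gap: "\<And>a b. 1 \<le> a \<Longrightarrow> a \<le> b \<Longrightarrow> b \<le> n \<Longrightarrow> w a + (b - a) \<le> w b"
  proof -
    fix a b :: nat assume "1 \<le> a" "a \<le> b" "b \<le> n"
    then show "w a + (b - a) \<le> w b"
    proof (induction b)
      case 0 then show ?case by simp
    next
      case (Suc b)
      show ?case
      proof (cases "a = Suc b")
        case True then show ?thesis by simp
      next
        case False
        then have "a \<le> b" using Suc.prems by simp
        then have "w a + (b - a) \<le> w b" using Suc by simp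
        moreover have "w b < w (Suc b)" using inc[of b] Suc.prems \<open>a \<le> b\<close> by simp
        ultimately show ?thesis using \<open>a \<le> b\<close> by simp
      qed
    qed
  qed
  show ?thesis
  proof
    fix k show "w k = id k"
    proof (cases "k \<in> {1..n}")
      case True
      have "w 1 \<ge> 1" "w n \<le> n" using rng[of 1] rng[of n] True by auto
      moreover have "w 1 + (k - 1) \<le> w k" "w k + (n - k) \<le> w n" using gap True by auto
      ultimately show ?thesis using True by auto
    next
      case False then show ?thesis using permutes_not_in[OF w] by simp
    qed
  qed
qed

lemma plen_id[simp]: "plen n id = 0"
proof -
  have "Inv n id = {}" unfolding Inv_def by auto
  then show ?thesis unfolding plen_Inv by simp
qed

lemma plen0_id:
  assumes w: "w permutes {1..n}" and "plen n w = 0"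
  shows "w = id"
proof (rule incr_bij_id[OF w])
  fix k assume k: "1 \<le> k" "k < n"
  have "\<not> Dr k w" using plen_sref_right(2)[OF w k] assms(2) by auto
  moreover have "w (Suc k) \<noteq> w k" using permutes_inj[OF w] by (metis inj_eq n_not_Suc_n)
  ultimately show "w k < w (Suc k)" unfolding Dr_def by simp
qed

lemma exists_Dl:
  assumes w: "w permutes {1..n}" and "w \<noteq> id"
  shows "\<exists>i. 1 \<le> i \<and> i < n \<and> Dl i w"
proof (rule ccontr)
  assume "\<not> ?thesis"
  then have "\<And>k. 1 \<le> k \<Longrightarrow> k < n \<Longrightarrow> \<not> Dr k (inv w)"
    using Dl_inv[OF permutes_inv[OF w]] by (simp add: permutes_inv_inv[OF w])
  moreover have winv: "inv w permutes {1..n}" using permutes_inv[OF w] .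
  ultimately have "\<And>k. 1 \<le> k \<Longrightarrow> k < n \<Longrightarrow> inv w k < inv w (Suc k)"
    unfolding Dr_def using permutes_inj[OF winv] by (metis inj_eq linorder_neqE_nat n_not_Suc_n)
  then have "inv w = id" by (rule incr_bij_id[OF winv])
  then have "w = id" by (metis inv_id permutes_inv_inv[OF w])
  then show False using assms by simp
qed

lemma exists_Dr:
  assumes w: "w permutes {1..n}" and "w \<noteq> id"
  shows "\<exists>i. 1 \<le> i \<and> i < n \<and> Dr i w"
proof -
  have winv: "inv w permutes {1..n}" using permutes_inv[OF w] .
  have "inv w \<noteq> id" using assms by (metis inv_id permutes_inv_inv[OF w])
  then show ?thesis using exists_Dl[OF winv] Dl_inv[OF w] by auto
qed

definition wprod :: "nat list \<Rightarrow> perm" where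
  "wprod ws = foldr (\<lambda>i f. sref i \<circ> f) ws id"

lemma wprod_Nil[simp]: "wprod [] = id" and wprod_Cons[simp]: "wprod (i # ws) = sref i \<circ> wprod ws"
  unfolding wprod_def by simp_all

definition redw :: "nat \<Rightarrow> nat list \<Rightarrow> perm \<Rightarrow> bool" where
  "redw n ws w \<longleftrightarrow> set ws \<subseteq> {1..<n} \<and> length ws = plen n w \<and> wprod ws = w"

lemma wprod_permutes: "set ws \<subseteq> {1..<n} \<Longrightarrow> wprod ws permutes {1..n}"
proof (induction ws)
  case Nil then show ?case by (simp only: wprod_Nil permutes_id)
next
  case (Cons i ws)
  have i: "1 \<le> i" "i < n" using Cons.prems by auto
  have "wprod ws permutes {1..n}" using Cons by auto
  then show ?case unfolding wprod_Cons by (rule permutes_compose[OF _ sref_permutes[OF i]])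
qed

lemma redw_exists:
  assumes "w permutes {1..n}"
  shows "\<exists>ws. redw n ws w"
  using assms
proof (induction "plen n w" arbitrary: w)
  case 0
  then have "w = id" using plen0_id by simp
  then show ?case unfolding redw_def by (auto intro: exI[of _ "[]"])
next
  case (Suc m)
  have "w \<noteq> id" using Suc.hyps(2) by auto
  then obtain i where i: "1 \<le> i" "i < n" "Dl i w" using exists_Dl[OF Suc.prems] by auto
  define w' where "w' = sref i \<circ> w"
  have w': "w' permutes {1..n}" unfolding w'_def using permutes_compose[OF Suc.prems sref_permutes[OF i(1,2)]] .
  have pl: "plen n w' = m" unfolding w'_def using plen_sref_left[OF Suc.prems i(1,2)] i(3) Suc.hyps(2) by simp
  obtain ws where ws: "redw n ws w'" using Suc.hyps(1)[OF pl[symmetric] w'] by auto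
  have "w = sref i \<circ> w'" unfolding w'_def by (simp add: o_assoc)
  then have "redw n (i # ws) w" using ws i pl Suc.hyps(2) unfolding redw_def by auto
  then show ?case by blast
qed

lemma redword_redw: "w permutes {1..n} \<Longrightarrow> redw n (redword n w) w"
  using redw_exists[of w n] someI_ex[of "\<lambda>ws. redw n ws w"]
  unfolding redword_def redw_def wprod_def by simp

lemma plen_wprod_le: "set ws \<subseteq> {1..<n} \<Longrightarrow> plen n (wprod ws) \<le> length ws"
proof (induction ws)
  case Nil then show ?case by (simp only: wprod_Nil plen_id)
next
  case (Cons i ws)
  have i: "1 \<le> i" "i < n" using Cons.prems by auto
  have "plen n (sref i \<circ> wprod ws) \<le> Suc (plen n (wprod ws))"
    using plen_sref_left(1)[OF wprod_permutes i, of ws] Cons.prems by auto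
  moreover have "plen n (wprod ws) \<le> length ws" using Cons by auto
  ultimately show ?case unfolding wprod_Cons length_Cons by linarith
qed



definition Lop :: "'a::comm_ring_1 \<Rightarrow> nat \<Rightarrow> 'a hecke \<Rightarrow> 'a hecke" where
  "Lop t i v = (\<lambda>w. if Dl i w then v (sref i \<circ> w) + (t - 1) * v w else t * v (sref i \<circ> w))"

definition Rop :: "'a::comm_ring_1 \<Rightarrow> nat \<Rightarrow> 'a hecke \<Rightarrow> 'a hecke" where
  "Rop t k v = (\<lambda>w. if Dr k w then v (w \<circ> sref k) + (t - 1) * v w else t * v (w \<circ> sref k))"

lemma finite_Sn[simp]: "finite (Sn n)"
  unfolding Sn_def by (rule finite_permutations) simp

lemma id_Sn[simp]: "id \<in> Sn n"
  unfolding Sn_def by simp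

lemma sref_Sn: "1 \<le> i \<Longrightarrow> i < n \<Longrightarrow> sref i \<in> Sn n"
  unfolding Sn_def using sref_permutes by simp

lemma Sn_comp: "u \<in> Sn n \<Longrightarrow> w \<in> Sn n \<Longrightarrow> u \<circ> w \<in> Sn n"
  unfolding Sn_def by (simp add: permutes_compose)

lemma Sn_inv: "u \<in> Sn n \<Longrightarrow> inv u \<in> Sn n"
  unfolding Sn_def by (simp add: permutes_inv)

lemma notSn_left: "w \<notin> Sn n \<Longrightarrow> 1 \<le> i \<Longrightarrow> i < n \<Longrightarrow> sref i \<circ> w \<notin> Sn n"
proof
  assume "w \<notin> Sn n" "1 \<le> i" "i < n" "sref i \<circ> w \<in> Sn n"
  then have "sref i \<circ> (sref i \<circ> w) \<in> Sn n" using Sn_comp sref_Sn by blast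
  then show False using \<open>w \<notin> Sn n\<close> by (simp add: o_assoc)
qed

lemma notSn_right: "w \<notin> Sn n \<Longrightarrow> 1 \<le> i \<Longrightarrow> i < n \<Longrightarrow> w \<circ> sref i \<notin> Sn n"
proof
  assume "w \<notin> Sn n" "1 \<le> i" "i < n" "w \<circ> sref i \<in> Sn n"
  then have "(w \<circ> sref i) \<circ> sref i \<in> Sn n" using Sn_comp sref_Sn by blast
  then show False using \<open>w \<notin> Sn n\<close> by (simp add: o_assoc[symmetric])
qed

lemma HnD: "v \<in> Hn n \<Longrightarrow> w \<notin> Sn n \<Longrightarrow> v w = 0"
  unfolding Hn_def by auto

lemma HnI: "(\<And>w. w \<notin> Sn n \<Longrightarrow> v w = 0) \<Longrightarrow> v \<in> Hn n"
  unfolding Hn_def by auto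

lemma hgen_Lop:
  assumes v: "v \<in> Hn n" and i: "1 \<le> i" "i < n"
  shows "hgen n t i v = Lop t i v"
proof
  fix w show "hgen n t i v w = Lop t i v w"
  proof (cases "w \<in> Sn n")
    case True
    then show ?thesis unfolding hgen_def Lop_def using plen_sref_left_lt[of w n i] i
      by (simp add: Sn_iff)
  next
    case False
    then show ?thesis unfolding hgen_def Lop_def using HnD[OF v] notSn_left[OF False i] by simp
  qed
qed

lemma Lop_Hn: "v \<in> Hn n \<Longrightarrow> 1 \<le> i \<Longrightarrow> i < n \<Longrightarrow> Lop t i v \<in> Hn n"
  by (rule HnI) (simp add: Lop_def HnD notSn_left)

lemma Rop_Hn: "v \<in> Hn n \<Longrightarrow> 1 \<le> i \<Longrightarrow> i < n \<Longrightarrow> Rop t i v \<in> Hn n"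
  by (rule HnI) (simp add: Rop_def HnD notSn_right)

lemma hT_Hn: "w \<in> Sn n \<Longrightarrow> hT w \<in> Hn n"
  by (rule HnI) (auto simp: hT_def)

lemma hT_apply: "hT w x = (if x = w then 1 else 0)"
  unfolding hT_def by simp

lemma perm_facts:
  assumes w: "w permutes {1..n}"
  shows "\<And>x. inv w (w x) = x" "\<And>x. w (inv w x) = x" "\<And>x y. w x = w y \<longleftrightarrow> x = y"
    "\<And>x y. inv w x = inv w y \<longleftrightarrow> x = y"
  using permutes_inverses[OF w] permutes_inj[OF w] permutes_inj[OF permutes_inv[OF w]]
  by (auto simp: inj_eq)

lemma Dl_flip:
  assumes w: "w permutes {1..n}" and i: "1 \<le> i" "i < n"
  shows "Dl i (sref i \<circ> w) \<longleftrightarrow> \<not> Dl i w"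
proof -
  have "inv (sref i \<circ> w) = inv w \<circ> sref i"
    by (metis inv_sref o_inv_distrib permutes_bij[OF w] sref_def bij_transpose)
  moreover have "inv w i \<noteq> inv w (Suc i)" using perm_facts(4)[OF w] by simp
  ultimately show ?thesis unfolding Dl_def by (auto simp: sref_def)
qed

lemma Dr_flip:
  assumes w: "w permutes {1..n}"
  shows "Dr k (w \<circ> sref k) \<longleftrightarrow> \<not> Dr k w"
proof -
  have "w k \<noteq> w (Suc k)" using perm_facts(3)[OF w] by simp
  then show ?thesis unfolding Dr_def by (auto simp: sref_def)
qed

lemma Dl_right_generic:
  assumes w: "w permutes {1..n}" and c: "{w k, w (Suc k)} \<noteq> {i, Suc i}"
  shows "Dl i (w \<circ> sref k) \<longleftrightarrow> Dl i w"
proof -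
  have e: "inv (w \<circ> sref k) = sref k \<circ> inv w"
    by (metis inv_sref o_inv_distrib permutes_bij[OF w] sref_def bij_transpose)
  have ne: "inv w (Suc i) \<noteq> inv w i" using perm_facts(4)[OF w] by simp
  have "\<not> (inv w (Suc i) = k \<and> inv w i = Suc k)" "\<not> (inv w (Suc i) = Suc k \<and> inv w i = k)"
    using c perm_facts(2)[OF w] by (metis insert_commute)+
  then show ?thesis unfolding Dl_def e using sref_less[OF ne, of k] by simp
qed

lemma Dr_left_generic:
  assumes w: "w permutes {1..n}" and c: "{w k, w (Suc k)} \<noteq> {i, Suc i}"
  shows "Dr k (sref i \<circ> w) \<longleftrightarrow> Dr k w"
proof -
  have ne: "w (Suc k) \<noteq> w k" using perm_facts(3)[OF w] by simp
  have "\<not> (w (Suc k) = i \<and> w k = Suc i)" "\<not> (w (Suc k) = Suc i \<and> w k = i)"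
    using c by (metis insert_commute)+
  then show ?thesis unfolding Dr_def using sref_less[OF ne, of i] by simp
qed

lemma special_case:
  assumes w: "w permutes {1..n}" and c: "{w k, w (Suc k)} = {i, Suc i}"
  shows "sref i \<circ> w = w \<circ> sref k" "Dl i w \<longleftrightarrow> Dr k w"
proof -
  have c': "(w k = i \<and> w (Suc k) = Suc i) \<or> (w k = Suc i \<and> w (Suc k) = i)"
    using c by (metis doubleton_eq_iff)
  show "sref i \<circ> w = w \<circ> sref k"
  proof
    fix x show "(sref i \<circ> w) x = (w \<circ> sref k) x"
    proof -
      have a: "w x = w k \<longleftrightarrow> x = k" "w x = w (Suc k) \<longleftrightarrow> x = Suc k" using perm_facts(3)[OF w] by auto
      show ?thesis
      proof (cases "x = k")
        case True then show ?thesis using c' by (auto simp: sref_def)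
      next
        case False
        show ?thesis
        proof (cases "x = Suc k")
          case True then show ?thesis using c' by (auto simp: sref_def)
        next
          case False
          then have "w x \<noteq> i" "w x \<noteq> Suc i" using c' a \<open>x \<noteq> k\<close> by auto
          then show ?thesis using \<open>x \<noteq> k\<close> False by (simp add: sref_def)
        qed
      qed
    qed
  qed
  show "Dl i w \<longleftrightarrow> Dr k w"
  proof (cases "w k = i \<and> w (Suc k) = Suc i")
    case True
    then have "inv w i = k" "inv w (Suc i) = Suc k" using perm_facts(1)[OF w] by metis+
    then show ?thesis using True unfolding Dl_def Dr_def by simp
  next
    case False
    then have T: "w k = Suc i" "w (Suc k) = i" using c' by auto
    then have "inv w i = Suc k" "inv w (Suc i) = k" using perm_facts(1)[OF w] by metis+
    then show ?thesis using T unfolding Dl_def Dr_def by simp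
  qed
qed

lemma Lop_Rop_comm:
  assumes v: "v \<in> Hn n" and i: "1 \<le> i" "i < n" and k: "1 \<le> k" "k < n"
  shows "Lop t i (Rop t k v) = Rop t k (Lop t i v)"
proof
  fix w show "Lop t i (Rop t k v) w = Rop t k (Lop t i v) w"
  proof (cases "w \<in> Sn n")
    case False
    then show ?thesis using HnD[OF v] notSn_left notSn_right i k
      unfolding Lop_def Rop_def by simp
  next
    case True
    then have w: "w permutes {1..n}" by (simp add: Sn_iff)
    have w1: "sref i \<circ> w permutes {1..n}" using permutes_compose[OF w sref_permutes[OF i]] .
    have w2: "w \<circ> sref k permutes {1..n}" using permutes_compose[OF sref_permutes[OF k] w] .
    show ?thesis
    proof (cases "{w k, w (Suc k)} = {i, Suc i}")
      case True
      note sc = special_case[OF w True]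
      define x where "x = sref i \<circ> w"
      have f1: "Dr k x \<longleftrightarrow> \<not> Dr k w" using sc(1) Dr_flip[OF w] unfolding x_def by simp
      have f2: "Dl i x \<longleftrightarrow> \<not> Dl i w" using Dl_flip[OF w i] unfolding x_def by simp
      have e0: "w \<circ> sref k = x" using sc(1) unfolding x_def by simp
      have e1: "x \<circ> sref k = w" unfolding x_def sc(1) by (simp add: o_assoc[symmetric])
      have e2: "sref i \<circ> x = w" unfolding x_def by (simp add: o_assoc)
      show ?thesis
      proof (cases "Dl i w")
        case True
        then have "Dr k w" using sc(2) by simp
        then show ?thesis unfolding Lop_def Rop_def using True f1 f2 e0 e1 e2 x_def[symmetric]
          by (simp add: algebra_simps)
      next
        case False
        then have "\<not> Dr k w" using sc(2) by simp
        then show ?thesis unfolding Lop_def Rop_def using False f1 f2 e0 e1 e2 x_def[symmetric]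
          by (simp add: algebra_simps)
      qed
    next
      case False
      have f1: "Dr k (sref i \<circ> w) \<longleftrightarrow> Dr k w" using Dr_left_generic[OF w False] .
      have f2: "Dl i (w \<circ> sref k) \<longleftrightarrow> Dl i w" using Dl_right_generic[OF w False] .
      have e: "sref i \<circ> (w \<circ> sref k) = sref i \<circ> w \<circ> sref k" by (simp add: o_assoc)
      show ?thesis unfolding Lop_def Rop_def using f1 f2 e
        by (cases "Dl i w"; cases "Dr k w"; simp add: algebra_simps)
    qed
  qed
qed

lemma Lop_quadratic:
  assumes v: "v \<in> Hn n" and i: "1 \<le> i" "i < n"
  shows "Lop t i (Lop t i v) = (\<lambda>w. (t - 1) * Lop t i v w + t * v w)"
proof
  fix w show "Lop t i (Lop t i v) w = (t - 1) * Lop t i v w + t * v w"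
  proof (cases "w \<in> Sn n")
    case False
    then show ?thesis using HnD[OF v] notSn_left i unfolding Lop_def by simp
  next
    case True
    then have w: "w permutes {1..n}" by (simp add: Sn_iff)
    have e: "sref i \<circ> (sref i \<circ> w) = w" by (simp add: o_assoc)
    show ?thesis unfolding Lop_def using Dl_flip[OF w i] e by (simp add: algebra_simps)
  qed
qed



definition linop :: "nat \<Rightarrow> ('a::comm_ring_1 hecke \<Rightarrow> 'a hecke) \<Rightarrow> bool" where
  "linop n A \<longleftrightarrow> (\<forall>v\<in>Hn n. A v = (\<lambda>w. \<Sum>x\<in>Sn n. v x * A (hT x) w)) \<and> (\<forall>v\<in>Hn n. A v \<in> Hn n)"

definition rcomm :: "nat \<Rightarrow> 'a::comm_ring_1 \<Rightarrow> ('a hecke \<Rightarrow> 'a hecke) \<Rightarrow> bool" where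
  "rcomm n t A \<longleftrightarrow> (\<forall>k v. 1 \<le> k \<longrightarrow> k < n \<longrightarrow> v \<in> Hn n \<longrightarrow> A (Rop t k v) = Rop t k (A v))"

lemma expand: "v \<in> Hn n \<Longrightarrow> v w = (\<Sum>x\<in>Sn n. v x * hT x w)"
  by (cases "w \<in> Sn n") (auto simp: hT_apply HnD if_distrib cong: if_cong)

lemma expand_fun: "v \<in> Hn n \<Longrightarrow> v = (\<lambda>w. \<Sum>x\<in>Sn n. v x * hT x w)"
  using expand by blast

lemma linopD: "linop n A \<Longrightarrow> v \<in> Hn n \<Longrightarrow> A v w = (\<Sum>x\<in>Sn n. v x * A (hT x) w)"
  unfolding linop_def by metis

lemma linop_Hn: "linop n A \<Longrightarrow> v \<in> Hn n \<Longrightarrow> A v \<in> Hn n"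
  unfolding linop_def by blast

lemma linop_Lop: "1 \<le> i \<Longrightarrow> i < n \<Longrightarrow> linop n (Lop t i)"
  unfolding linop_def
proof (intro conjI ballI)
  fix v :: "'a hecke" assume v: "v \<in> Hn n" and i: "1 \<le> i" "i < n"
  show "Lop t i v \<in> Hn n" using Lop_Hn[OF v i] .
  show "Lop t i v = (\<lambda>w. \<Sum>x\<in>Sn n. v x * Lop t i (hT x) w)"
  proof
    fix w
    have "(\<Sum>x\<in>Sn n. v x * Lop t i (hT x) w) =
      (if Dl i w then (\<Sum>x\<in>Sn n. v x * hT x (sref i \<circ> w)) + (t - 1) * (\<Sum>x\<in>Sn n. v x * hT x w)
       else t * (\<Sum>x\<in>Sn n. v x * hT x (sref i \<circ> w)))"
      by (cases "Dl i w") (simp_all add: Lop_def distrib_left sum.distrib sum_distrib_left mult.left_commute)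
    then show "Lop t i v w = (\<Sum>x\<in>Sn n. v x * Lop t i (hT x) w)"
      using expand[OF v, symmetric] unfolding Lop_def by simp
  qed
qed

lemma linop_Rop: "1 \<le> i \<Longrightarrow> i < n \<Longrightarrow> linop n (Rop t i)"
  unfolding linop_def
proof (intro conjI ballI)
  fix v :: "'a hecke" assume v: "v \<in> Hn n" and i: "1 \<le> i" "i < n"
  show "Rop t i v \<in> Hn n" using Rop_Hn[OF v i] .
  show "Rop t i v = (\<lambda>w. \<Sum>x\<in>Sn n. v x * Rop t i (hT x) w)"
  proof
    fix w
    have "(\<Sum>x\<in>Sn n. v x * Rop t i (hT x) w) =
      (if Dr i w then (\<Sum>x\<in>Sn n. v x * hT x (w \<circ> sref i)) + (t - 1) * (\<Sum>x\<in>Sn n. v x * hT x w)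
       else t * (\<Sum>x\<in>Sn n. v x * hT x (w \<circ> sref i)))"
      by (cases "Dr i w") (simp_all add: Rop_def distrib_left sum.distrib sum_distrib_left mult.left_commute)
    then show "Rop t i v w = (\<Sum>x\<in>Sn n. v x * Rop t i (hT x) w)"
      using expand[OF v, symmetric] unfolding Rop_def by simp
  qed
qed

lemma linop_comp:
  assumes A: "linop n A" and B: "linop n B"
  shows "linop n (\<lambda>v. A (B v))"
  unfolding linop_def
proof (intro conjI ballI)
  fix v :: "'a hecke" assume v: "v \<in> Hn n"
  have Bv: "B v \<in> Hn n" using linop_Hn[OF B v] .
  show "A (B v) \<in> Hn n" using linop_Hn[OF A Bv] .
  show "A (B v) = (\<lambda>w. \<Sum>x\<in>Sn n. v x * A (B (hT x)) w)"
  proof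
    fix w
    have "A (B v) w = (\<Sum>y\<in>Sn n. B v y * A (hT y) w)" using linopD[OF A Bv] .
    also have "\<dots> = (\<Sum>y\<in>Sn n. (\<Sum>x\<in>Sn n. v x * B (hT x) y) * A (hT y) w)"
      using linopD[OF B v] by simp
    also have "\<dots> = (\<Sum>x\<in>Sn n. v x * (\<Sum>y\<in>Sn n. B (hT x) y * A (hT y) w))"
    proof -
      have "(\<Sum>y\<in>Sn n. (\<Sum>x\<in>Sn n. v x * B (hT x) y) * A (hT y) w) =
            (\<Sum>y\<in>Sn n. \<Sum>x\<in>Sn n. v x * (B (hT x) y * A (hT y) w))"
        by (simp add: sum_distrib_right mult.assoc)
      also have "\<dots> = (\<Sum>x\<in>Sn n. \<Sum>y\<in>Sn n. v x * (B (hT x) y * A (hT y) w))"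
        by (rule sum.swap)
      also have "\<dots> = (\<Sum>x\<in>Sn n. v x * (\<Sum>y\<in>Sn n. B (hT x) y * A (hT y) w))"
        by (simp add: sum_distrib_left)
      finally show ?thesis .
    qed
    also have "\<dots> = (\<Sum>x\<in>Sn n. v x * A (B (hT x)) w)"
    proof (rule sum.cong[OF refl])
      fix x assume "x \<in> Sn n"
      then have "B (hT x) \<in> Hn n" using linop_Hn[OF B hT_Hn] by blast
      then show "v x * (\<Sum>y\<in>Sn n. B (hT x) y * A (hT y) w) = v x * A (B (hT x)) w"
        using linopD[OF A] by metis
    qed
    finally show "A (B v) w = (\<Sum>x\<in>Sn n. v x * A (B (hT x)) w)" .
  qed
qed

lemma linop_id: "linop n (\<lambda>v. v)"
  unfolding linop_def using expand_fun by blast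

lemma rcommD: "rcomm n t A \<Longrightarrow> 1 \<le> k \<Longrightarrow> k < n \<Longrightarrow> v \<in> Hn n \<Longrightarrow> A (Rop t k v) = Rop t k (A v)"
  unfolding rcomm_def by simp

lemma rcomm_comp: "rcomm n t A \<Longrightarrow> rcomm n t B \<Longrightarrow> linop n B \<Longrightarrow> rcomm n t (\<lambda>v. A (B v))"
  unfolding rcomm_def by (simp add: linop_Hn)

lemma rcomm_Lop: "1 \<le> i \<Longrightarrow> i < n \<Longrightarrow> rcomm n t (Lop t i)"
  unfolding rcomm_def using Lop_Rop_comm by blast

lemma rcomm_id: "rcomm n t (\<lambda>v. v)"
  unfolding rcomm_def by simp

lemma sref_ne: "w \<in> Sn n \<Longrightarrow> 1 \<le> i \<Longrightarrow> i < n \<Longrightarrow> sref i \<circ> w \<noteq> w"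
proof
  assume a: "w \<in> Sn n" "1 \<le> i" "i < n" "sref i \<circ> w = w"
  then have "plen n (sref i \<circ> w) = plen n w" by simp
  then show False using plen_sref_left[of w n i] a by (simp add: Sn_iff split: if_splits)
qed

lemma sref_ne_right: "w \<in> Sn n \<Longrightarrow> 1 \<le> i \<Longrightarrow> i < n \<Longrightarrow> w \<circ> sref i \<noteq> w"
proof
  assume a: "w \<in> Sn n" "1 \<le> i" "i < n" "w \<circ> sref i = w"
  then have "plen n (w \<circ> sref i) = plen n w" by simp
  then show False using plen_sref_right[of w n i] a by (simp add: Sn_iff split: if_splits)
qed

lemma Lop_hT:
  assumes p: "p \<in> Sn n" and i: "1 \<le> i" "i < n" and nd: "\<not> Dl i p"
  shows "Lop t i (hT p) = hT (sref i \<circ> p)"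
proof
  fix z
  have pp: "p permutes {1..n}" using p by (simp add: Sn_iff)
  have ne: "sref i \<circ> p \<noteq> p" using sref_ne[OF p i] .
  have d: "Dl i (sref i \<circ> p)" using Dl_flip[OF pp i] nd by simp
  have e: "sref i \<circ> (sref i \<circ> p) = p" by (simp add: o_assoc)
  have z: "sref i \<circ> z = p \<longleftrightarrow> z = sref i \<circ> p"
    by (metis e o_assoc sref_sref id_o)
  show "Lop t i (hT p) z = hT (sref i \<circ> p) z"
    unfolding Lop_def hT_apply using ne d nd z by auto
qed

lemma Rop_hT:
  assumes p: "p \<in> Sn n" and i: "1 \<le> i" "i < n" and nd: "\<not> Dr i p"
  shows "Rop t i (hT p) = hT (p \<circ> sref i)"
proof
  fix z
  have pp: "p permutes {1..n}" using p by (simp add: Sn_iff)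
  have ne: "p \<circ> sref i \<noteq> p" using sref_ne_right[OF p i] .
  have d: "Dr i (p \<circ> sref i)" using Dr_flip[OF pp] nd by simp
  have e: "(p \<circ> sref i) \<circ> sref i = p" by (simp add: o_assoc[symmetric])
  have z: "z \<circ> sref i = p \<longleftrightarrow> z = p \<circ> sref i"
    by (metis e o_assoc sref_sref comp_id)
  show "Rop t i (hT p) z = hT (p \<circ> sref i) z"
    unfolding Rop_def hT_apply using ne d nd z by auto
qed

lemma uniq_principle:
  assumes A: "linop n A" and B: "linop n B" and rA: "rcomm n t A" and rB: "rcomm n t B"
    and base: "A (hT id) = B (hT id)" and v: "v \<in> Hn n"
  shows "A v = B v"
proof -
  have basis: "\<forall>x. x \<in> Sn n \<longrightarrow> A (hT x) = B (hT x)"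
  proof (intro allI)
    fix x show "x \<in> Sn n \<longrightarrow> A (hT x) = B (hT x)"
    proof (induction "plen n x" arbitrary: x rule: less_induct)
      case less
      show ?case
      proof
        assume x: "x \<in> Sn n"
        have xp: "x permutes {1..n}" using x by (simp add: Sn_iff)
        show "A (hT x) = B (hT x)"
        proof (cases "x = id")
          case True then show ?thesis using base by simp
        next
          case False
          obtain k where k: "1 \<le> k" "k < n" "Dr k x" using exists_Dr[OF xp False] by auto
          define y where "y = x \<circ> sref k"
          have y: "y \<in> Sn n" unfolding y_def using Sn_comp[OF x sref_Sn[OF k(1,2)]] .
          have yx: "y \<circ> sref k = x" unfolding y_def by (simp add: o_assoc[symmetric])
          have ndy: "\<not> Dr k y" unfolding y_def using Dr_flip[OF xp] k(3) by simp
          have ply: "plen n y < plen n x" unfolding y_def using plen_sref_right[OF xp k(1,2)] k(3) by simp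
          have hx: "hT x = Rop t k (hT y)" using Rop_hT[OF y k(1,2) ndy, of t] yx by simp
          have IH: "A (hT y) = B (hT y)" using less[OF ply] y by simp
          have cA: "A (Rop t k (hT y)) = Rop t k (A (hT y))" using rcommD[OF rA k(1,2) hT_Hn[OF y]] .
          have cB: "B (Rop t k (hT y)) = Rop t k (B (hT y))" using rcommD[OF rB k(1,2) hT_Hn[OF y]] .
          have "A (hT x) = Rop t k (A (hT y))" unfolding hx by (rule cA)
          also have "\<dots> = Rop t k (B (hT y))" using IH by simp
          also have "\<dots> = B (hT x)" unfolding hx by (rule cB[symmetric])
          finally show ?thesis .
        qed
      qed
    qed
  qed
  show ?thesis
  proof
    fix w
    have "A v w = (\<Sum>x\<in>Sn n. v x * A (hT x) w)" by (rule linopD[OF A v])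
    also have "\<dots> = (\<Sum>x\<in>Sn n. v x * B (hT x) w)"
      by (rule sum.cong[OF refl]) (simp add: basis)
    also have "\<dots> = B v w" by (rule linopD[OF B v, symmetric])
    finally show "A v w = B v w" .
  qed
qed



definition wop :: "'a::comm_ring_1 \<Rightarrow> nat list \<Rightarrow> 'a hecke \<Rightarrow> 'a hecke" where
  "wop t ws v = foldr (Lop t) ws v"

lemma wop_Nil[simp]: "wop t [] v = v" and wop_Cons[simp]: "wop t (i # ws) v = Lop t i (wop t ws v)"
  unfolding wop_def by simp_all

lemma wop_props:
  assumes "set ws \<subseteq> {1..<n}"
  shows "linop n (wop t ws) \<and> rcomm n t (wop t ws)"
  using assms
proof (induction ws)
  case Nil
  have "wop t [] = (\<lambda>v. v)" by (rule ext) simp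
  then show ?case using linop_id rcomm_id by metis
next
  case (Cons i ws)
  have i: "1 \<le> i" "i < n" using Cons.prems by auto
  have IH: "linop n (wop t ws)" "rcomm n t (wop t ws)" using Cons by auto
  have e: "wop t (i # ws) = (\<lambda>v. Lop t i (wop t ws v))" by (rule ext) simp
  show ?case unfolding e
    using linop_comp[OF linop_Lop[OF i] IH(1)] rcomm_comp[OF rcomm_Lop[OF i] IH(2) IH(1)] by simp
qed

lemma hgen_wop:
  assumes "set ws \<subseteq> {1..<n}" and v: "v \<in> Hn n"
  shows "foldr (hgen n t) ws v = wop t ws v"
  using assms(1)
proof (induction ws)
  case Nil then show ?case by simp
next
  case (Cons i ws)
  have i: "1 \<le> i" "i < n" using Cons.prems by auto
  have "wop t ws v \<in> Hn n" using linop_Hn[OF conjunct1[OF wop_props] v] Cons.prems by simp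
  then show ?case using Cons hgen_Lop[OF _ i] by simp
qed

lemma wop_hT:
  assumes "redw n ws w"
  shows "wop t ws (hT id) = hT w"
  using assms
proof (induction ws arbitrary: w)
  case Nil then show ?case by (simp add: redw_def)
next
  case (Cons i ws)
  have i: "1 \<le> i" "i < n" and ws: "set ws \<subseteq> {1..<n}" using Cons.prems by (auto simp: redw_def)
  define p where "p = wprod ws"
  have pp: "p permutes {1..n}" unfolding p_def using wprod_permutes[OF ws] .
  have w: "w = sref i \<circ> p" using Cons.prems unfolding redw_def p_def by simp
  have len: "plen n w = Suc (length ws)" using Cons.prems by (simp add: redw_def)
  have le: "plen n p \<le> length ws" unfolding p_def using plen_wprod_le[OF ws] .
  have pl: "plen n w = (if Dl i p then plen n p - 1 else Suc (plen n p))"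
    using plen_sref_left(1)[OF pp i] w by simp
  have nd: "\<not> Dl i p" and lp: "plen n p = length ws" using pl len le by (auto split: if_splits)
  have "redw n ws p" using ws lp unfolding redw_def p_def by simp
  then have ih: "wop t ws (hT id) = hT p" by (rule Cons.IH)
  have pS: "p \<in> Sn n" using pp by (simp add: Sn_iff)
  show ?case unfolding w wop_Cons ih by (rule Lop_hT[OF pS i nd])
qed

lemma hop_wop:
  assumes w: "w \<in> Sn n" and v: "v \<in> Hn n"
  shows "hop n t w v = wop t (redword n w) v"
proof -
  have r: "redw n (redword n w) w" using redword_redw w by (simp add: Sn_iff)
  then show ?thesis unfolding hop_def using hgen_wop[OF _ v] by (simp add: redw_def)
qed

lemma hop_props:
  assumes w: "w \<in> Sn n"
  shows "linop n (hop n t w)" "rcomm n t (hop n t w)" "hop n t w (hT id) = hT w"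
proof -
  have r: "redw n (redword n w) w" using redword_redw w by (simp add: Sn_iff)
  then have s: "set (redword n w) \<subseteq> {1..<n}" by (simp add: redw_def)
  note P = wop_props[OF s, of t]
  have L: "linop n (wop t (redword n w))" using P by simp
  have R: "rcomm n t (wop t (redword n w))" using P by simp
  show "linop n (hop n t w)"
    unfolding linop_def
  proof (intro conjI ballI)
    fix v :: "'a hecke" assume v: "v \<in> Hn n"
    have "hop n t w v = wop t (redword n w) v" by (rule hop_wop[OF w v])
    also have "\<dots> = (\<lambda>wa. \<Sum>x\<in>Sn n. v x * wop t (redword n w) (hT x) wa)"
      using L v unfolding linop_def by blast
    also have "\<dots> = (\<lambda>wa. \<Sum>x\<in>Sn n. v x * hop n t w (hT x) wa)"
      by (rule ext, rule sum.cong[OF refl]) (simp add: hop_wop[OF w hT_Hn])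
    finally show "hop n t w v = (\<lambda>wa. \<Sum>x\<in>Sn n. v x * hop n t w (hT x) wa)" .
    show "hop n t w v \<in> Hn n" using hop_wop[OF w v] linop_Hn[OF L v] by simp
  qed
  show "rcomm n t (hop n t w)"
    unfolding rcomm_def
  proof (intro allI impI)
    fix k :: nat and v :: "'a hecke" assume k: "1 \<le> k" "k < n" and v: "v \<in> Hn n"
    have "hop n t w (Rop t k v) = wop t (redword n w) (Rop t k v)" by (rule hop_wop[OF w Rop_Hn[OF v k]])
    also have "\<dots> = Rop t k (wop t (redword n w) v)" by (rule rcommD[OF R k v])
    also have "\<dots> = Rop t k (hop n t w v)" using hop_wop[OF w v] by simp
    finally show "hop n t w (Rop t k v) = Rop t k (hop n t w v)" .
  qed
  show "hop n t w (hT id) = hT w"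
    using hop_wop[OF w hT_Hn[OF id_Sn], of t] wop_hT[OF r, of t] by (rule trans)
qed

lemma hop_left:
  assumes w: "w \<in> Sn n" and i: "1 \<le> i" "i < n" and nd: "\<not> Dl i w" and v: "v \<in> Hn n"
  shows "hop n t (sref i \<circ> w) v = Lop t i (hop n t w v)"
proof -
  have sw: "sref i \<circ> w \<in> Sn n" using Sn_comp[OF sref_Sn[OF i] w] .
  note P1 = hop_props[OF sw, of t] and P2 = hop_props[OF w, of t]
  show ?thesis
  proof (rule uniq_principle[OF P1(1) _ P1(2) _ _ v])
    show "linop n (\<lambda>v. Lop t i (hop n t w v))" using linop_comp[OF linop_Lop[OF i] P2(1)] .
    show "rcomm n t (\<lambda>v. Lop t i (hop n t w v))" using rcomm_comp[OF rcomm_Lop[OF i] P2(2) P2(1)] .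
    show "hop n t (sref i \<circ> w) (hT id) = Lop t i (hop n t w (hT id))"
      using P1(3) P2(3) Lop_hT[OF w i nd, of t] by simp
  qed
qed

lemma hop_id: "v \<in> Hn n \<Longrightarrow> hop n t id v = v"
  using uniq_principle[OF hop_props(1)[OF id_Sn] linop_id hop_props(2)[OF id_Sn] rcomm_id]
    hop_props(3)[OF id_Sn] by metis

lemma Dl_id: "\<not> Dl i id"
  unfolding Dl_def by simp

lemma Dr_id: "\<not> Dr i id"
  unfolding Dr_def by simp

lemma hop_sref: "1 \<le> i \<Longrightarrow> i < n \<Longrightarrow> v \<in> Hn n \<Longrightarrow> hop n t (sref i) v = Lop t i v"
proof -
  assume a: "1 \<le> i" "i < n" "v \<in> Hn n"
  have "hop n t id v = v" by (rule hop_id[OF a(3)])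
  then show ?thesis using hop_left[OF id_Sn a(1,2) Dl_id a(3), of t] by simp
qed

lemma hmul_apply: "hmul n t h v x = (\<Sum>w\<in>Sn n. h w * hop n t w v x)"
  unfolding hmul_def by simp

lemma hmul_Hn: "v \<in> Hn n \<Longrightarrow> hmul n t h v \<in> Hn n"
proof (rule HnI)
  fix x assume v: "v \<in> Hn n" and x: "x \<notin> Sn n"
  have "\<And>w. w \<in> Sn n \<Longrightarrow> hop n t w v x = 0"
    using linop_Hn[OF hop_props(1) v] HnD x by blast
  then show "hmul n t h v x = 0" unfolding hmul_apply by simp
qed

lemma hmul_linop: "linop n (hmul n t h)"
  unfolding linop_def
proof (intro conjI ballI)
  fix v :: "'a hecke" assume v: "v \<in> Hn n"
  show "hmul n t h v \<in> Hn n" using hmul_Hn[OF v] .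
  show "hmul n t h v = (\<lambda>x. \<Sum>y\<in>Sn n. v y * hmul n t h (hT y) x)"
  proof
    fix x
    have "hmul n t h v x = (\<Sum>w\<in>Sn n. h w * (\<Sum>y\<in>Sn n. v y * hop n t w (hT y) x))"
      unfolding hmul_apply
      by (rule sum.cong[OF refl]) (simp add: linopD[OF hop_props(1) v])
    also have "\<dots> = (\<Sum>w\<in>Sn n. \<Sum>y\<in>Sn n. v y * (h w * hop n t w (hT y) x))"
      by (simp add: sum_distrib_left mult.left_commute)
    also have "\<dots> = (\<Sum>y\<in>Sn n. \<Sum>w\<in>Sn n. v y * (h w * hop n t w (hT y) x))"
      by (rule sum.swap)
    also have "\<dots> = (\<Sum>y\<in>Sn n. v y * hmul n t h (hT y) x)"
      unfolding hmul_apply by (simp add: sum_distrib_left)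
    finally show "hmul n t h v x = (\<Sum>y\<in>Sn n. v y * hmul n t h (hT y) x)" .
  qed
qed

lemma Rop_sum: "Rop t k (\<lambda>x. \<Sum>w\<in>A. c w * f w x) = (\<lambda>x. \<Sum>w\<in>A. c w * Rop t k (f w) x)"
  unfolding Rop_def
  by (rule ext) (simp add: sum.distrib sum_distrib_left distrib_left mult.left_commute)

lemma hmul_rcomm: "rcomm n t (hmul n t h)"
  unfolding rcomm_def
proof (intro allI impI)
  fix k :: nat and v :: "'a hecke" assume k: "1 \<le> k" "k < n" and v: "v \<in> Hn n"
  have "hmul n t h (Rop t k v) = (\<lambda>x. \<Sum>w\<in>Sn n. h w * Rop t k (hop n t w v) x)"
    unfolding hmul_def by (rule ext, rule sum.cong[OF refl]) (simp add: rcommD[OF hop_props(2) k v])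
  also have "\<dots> = Rop t k (hmul n t h v)"
    unfolding hmul_def by (rule Rop_sum[symmetric])
  finally show "hmul n t h (Rop t k v) = Rop t k (hmul n t h v)" .
qed

lemma hmul_hT_id: "h \<in> Hn n \<Longrightarrow> hmul n t h (hT id) = h"
proof
  fix x assume h: "h \<in> Hn n"
  have "hmul n t h (hT id) x = (\<Sum>w\<in>Sn n. h w * hT w x)"
    unfolding hmul_apply by (rule sum.cong[OF refl]) (simp add: hop_props(3))
  also have "\<dots> = h x" by (rule expand[OF h, symmetric])
  finally show "hmul n t h (hT id) x = h x" .
qed

lemma hmul_hT: "w \<in> Sn n \<Longrightarrow> hmul n t (hT w) v = hop n t w v"
proof (rule ext)
  fix x assume w: "w \<in> Sn n"
  have "hmul n t (hT w) v x = (\<Sum>wa\<in>Sn n. if wa = w then hop n t wa v x else 0)"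
    unfolding hmul_apply hT_apply by (rule sum.cong[OF refl]) simp
  also have "\<dots> = hop n t w v x" using w by (simp add: sum.delta')
  finally show "hmul n t (hT w) v x = hop n t w v x" .
qed

lemma hmul_assoc:
  assumes h: "h \<in> Hn n" and g: "g \<in> Hn n" and v: "v \<in> Hn n"
  shows "hmul n t h (hmul n t g v) = hmul n t (hmul n t h g) v"
proof (rule uniq_principle[OF _ hmul_linop _ hmul_rcomm _ v])
  show "linop n (\<lambda>v. hmul n t h (hmul n t g v))" using linop_comp[OF hmul_linop hmul_linop] .
  show "rcomm n t (\<lambda>v. hmul n t h (hmul n t g v))" using rcomm_comp[OF hmul_rcomm hmul_rcomm hmul_linop] .
  show "hmul n t h (hmul n t g (hT id)) = hmul n t (hmul n t h g) (hT id)"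
    using hmul_hT_id[OF g] hmul_hT_id[OF hmul_Hn[OF g]] by simp
qed

lemma hone_Hn: "hone \<in> Hn n"
  unfolding hone_def by (rule hT_Hn[OF id_Sn])

lemma hmul_hone_left: "v \<in> Hn n \<Longrightarrow> hmul n t hone v = v"
  unfolding hone_def using hmul_hT[OF id_Sn] hop_id by metis

lemma hmul_hone_right: "h \<in> Hn n \<Longrightarrow> hmul n t h hone = h"
  unfolding hone_def by (rule hmul_hT_id)

lemma hmul_lin_left:
  "hmul n t (\<lambda>x. a * h x + b * g x) v = (\<lambda>x. a * hmul n t h v x + b * hmul n t g v x)"
  unfolding hmul_def
  by (rule ext) (simp add: sum.distrib sum_distrib_left distrib_right mult.assoc)

lemma hmul_smult_left:
  "hmul n t (\<lambda>x. a * h x) v = (\<lambda>x. a * hmul n t h v x)"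
  unfolding hmul_def
  by (rule ext) (simp add: sum_distrib_left mult.assoc)

lemma linop_lin:
  assumes A: "linop n A" and u: "u \<in> Hn n" and v: "v \<in> Hn n"
  shows "A (\<lambda>x. a * u x + b * v x) = (\<lambda>x. a * A u x + b * A v x)"
proof
  fix w
  have uv: "(\<lambda>x. a * u x + b * v x) \<in> Hn n" using u v by (intro HnI) (simp add: HnD)
  have "A (\<lambda>x. a * u x + b * v x) w = (\<Sum>x\<in>Sn n. (a * u x + b * v x) * A (hT x) w)"
    by (rule linopD[OF A uv])
  also have "\<dots> = a * (\<Sum>x\<in>Sn n. u x * A (hT x) w) + b * (\<Sum>x\<in>Sn n. v x * A (hT x) w)"
    by (simp add: sum.distrib sum_distrib_left distrib_right mult.assoc)
  also have "\<dots> = a * A u w + b * A v w" using linopD[OF A u] linopD[OF A v] by simp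
  finally show "A (\<lambda>x. a * u x + b * v x) w = a * A u w + b * A v w" .
qed

lemma linop_smult:
  assumes A: "linop n A" and u: "u \<in> Hn n"
  shows "A (\<lambda>x. a * u x) = (\<lambda>x. a * A u x)"
  using linop_lin[OF A u u, of a 0] by simp



definition Tinv :: "'a::comm_ring_1 \<Rightarrow> 'a \<Rightarrow> nat \<Rightarrow> 'a hecke" where
  "Tinv t ti i = (\<lambda>x. ti * hT (sref i) x + (ti * (1 - t)) * hT id x)"

definition Tt :: "'a::comm_ring_1 \<Rightarrow> nat \<Rightarrow> 'a hecke" where
  "Tt t i = (\<lambda>x. 1 * hT (sref i) x + (1 - t) * hT id x)"

definition theta :: "nat \<Rightarrow> 'a::comm_ring_1 \<Rightarrow> perm \<Rightarrow> 'a hecke" where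
  "theta n t u = (\<lambda>x. t ^ plen n u * hinv n t (hT (inv u)) x)"

definition invertible :: "nat \<Rightarrow> 'a::comm_ring_1 \<Rightarrow> 'a hecke \<Rightarrow> bool" where
  "invertible n t h \<longleftrightarrow> (\<exists>g\<in>Hn n. hmul n t h g = hone \<and> hmul n t g h = hone)"

lemma lin_Hn: "u \<in> Hn n \<Longrightarrow> v \<in> Hn n \<Longrightarrow> (\<lambda>x. a * u x + b * v x) \<in> Hn n"
  by (intro HnI) (simp add: HnD)

lemma smult_Hn: "u \<in> Hn n \<Longrightarrow> (\<lambda>x. a * u x) \<in> Hn n"
  by (intro HnI) (simp add: HnD)

lemma Tinv_Hn: assumes "1 \<le> i" "i < n" shows "Tinv t ti i \<in> Hn n"
  unfolding Tinv_def by (rule lin_Hn[OF hT_Hn[OF sref_Sn[OF assms]] hT_Hn[OF id_Sn]])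

lemma Tt_Hn: assumes "1 \<le> i" "i < n" shows "Tt t i \<in> Hn n"
  unfolding Tt_def by (rule lin_Hn[OF hT_Hn[OF sref_Sn[OF assms]] hT_Hn[OF id_Sn]])

lemma Lop_hT_id: "1 \<le> i \<Longrightarrow> i < n \<Longrightarrow> Lop t i (hT id) = hT (sref i)"
  using Lop_hT[OF id_Sn _ _ Dl_id, of i n t] by simp

lemma TT:
  assumes i: "1 \<le> i" "i < n"
  shows "hmul n t (hT (sref i)) (hT (sref i)) = (\<lambda>x. (t - 1) * hT (sref i) x + t * hT id x)"
proof -
  have "hmul n t (hT (sref i)) (hT (sref i)) = Lop t i (hT (sref i))"
    using hmul_hT[OF sref_Sn[OF i], where t=t] hop_sref[OF i hT_Hn[OF sref_Sn[OF i]], where t=t] by simp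
  also have "\<dots> = Lop t i (Lop t i (hT id))" using Lop_hT_id[OF i, where t=t] by simp
  also have "\<dots> = (\<lambda>x. (t - 1) * Lop t i (hT id) x + t * hT id x)"
    by (rule Lop_quadratic[OF hT_Hn[OF id_Sn] i])
  also have "\<dots> = (\<lambda>x. (t - 1) * hT (sref i) x + t * hT id x)" using Lop_hT_id[OF i, where t=t] by simp
  finally show ?thesis .
qed

lemma Tinv_left:
  assumes i: "1 \<le> i" "i < n" and ti: "t * ti = 1"
  shows "hmul n t (hT (sref i)) (Tinv t ti i) = hone"
proof -
  have "hmul n t (hT (sref i)) (Tinv t ti i) =
      (\<lambda>x. ti * hmul n t (hT (sref i)) (hT (sref i)) x + (ti * (1 - t)) * hmul n t (hT (sref i)) (hT id) x)"
    unfolding Tinv_def by (rule linop_lin[OF hmul_linop hT_Hn[OF sref_Sn[OF i]] hT_Hn[OF id_Sn]])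
  also have "\<dots> = (\<lambda>x. (ti * t) * hT id x)"
    unfolding TT[OF i] hmul_hT_id[OF hT_Hn[OF sref_Sn[OF i]]] by (rule ext) (simp add: algebra_simps)
  also have "\<dots> = hone" using ti unfolding hone_def by (simp add: mult.commute)
  finally show ?thesis .
qed

lemma Tinv_right:
  assumes i: "1 \<le> i" "i < n" and ti: "t * ti = 1"
  shows "hmul n t (Tinv t ti i) (hT (sref i)) = hone"
proof -
  have "hmul n t (Tinv t ti i) (hT (sref i)) =
      (\<lambda>x. ti * hmul n t (hT (sref i)) (hT (sref i)) x + (ti * (1 - t)) * hmul n t (hT id) (hT (sref i)) x)"
    unfolding Tinv_def by (rule hmul_lin_left)
  also have "\<dots> = (\<lambda>x. (ti * t) * hT id x)"
    unfolding TT[OF i] hmul_hone_left[OF hT_Hn[OF sref_Sn[OF i]], unfolded hone_def]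
    by (rule ext) (simp add: algebra_simps)
  also have "\<dots> = hone" using ti unfolding hone_def by (simp add: mult.commute)
  finally show ?thesis .
qed

lemma hinv_eq:
  assumes h: "h \<in> Hn n" and g: "g \<in> Hn n" and hg: "hmul n t h g = hone" and gh: "hmul n t g h = hone"
  shows "hinv n t h = g"
  unfolding hinv_def
proof (rule the_equality)
  show "g \<in> Hn n \<and> hmul n t h g = hone \<and> hmul n t g h = hone" using g hg gh by simp
  fix g' assume g': "g' \<in> Hn n \<and> hmul n t h g' = hone \<and> hmul n t g' h = hone"
  have "g' = hmul n t g' hone" using hmul_hone_right[of g' n t] g' by simp
  also have "\<dots> = hmul n t g' (hmul n t h g)" using hg by simp
  also have "\<dots> = hmul n t (hmul n t g' h) g" using hmul_assoc[OF _ h g] g' by simp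
  also have "\<dots> = g" using g' hmul_hone_left[OF g] by simp
  finally show "g' = g" .
qed

lemma invertibleD:
  assumes h: "h \<in> Hn n" and inv: "invertible n t h"
  shows "hinv n t h \<in> Hn n" "hmul n t h (hinv n t h) = hone" "hmul n t (hinv n t h) h = hone"
proof -
  obtain g where g: "g \<in> Hn n" "hmul n t h g = hone" "hmul n t g h = hone"
    using inv unfolding invertible_def by blast
  have "hinv n t h = g" by (rule hinv_eq[OF h g])
  then show "hinv n t h \<in> Hn n" "hmul n t h (hinv n t h) = hone" "hmul n t (hinv n t h) h = hone"
    using g by simp_all
qed

lemma hinv_sref:
  assumes i: "1 \<le> i" "i < n" and ti: "t * ti = 1"
  shows "hinv n t (hT (sref i)) = Tinv t ti i" "invertible n t (hT (sref i))"
proof -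
  show "hinv n t (hT (sref i)) = Tinv t ti i"
    by (rule hinv_eq[OF hT_Hn[OF sref_Sn[OF i]] Tinv_Hn[OF i] Tinv_left[OF i ti] Tinv_right[OF i ti]])
  show "invertible n t (hT (sref i))"
    unfolding invertible_def using Tinv_Hn[OF i] Tinv_left[OF i ti] Tinv_right[OF i ti] by blast
qed

lemma mul_invertible:
  assumes A: "A \<in> Hn n" "invertible n t A" and B: "B \<in> Hn n" "invertible n t B"
  shows "invertible n t (hmul n t A B)"
    "hinv n t (hmul n t A B) = hmul n t (hinv n t B) (hinv n t A)"
proof -
  note a = invertibleD[OF A] and b = invertibleD[OF B]
  have AB: "hmul n t A B \<in> Hn n" using hmul_Hn[OF B(1)] .
  have BA: "hmul n t (hinv n t B) (hinv n t A) \<in> Hn n" using hmul_Hn[OF a(1)] .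
  have 1: "hmul n t (hmul n t A B) (hmul n t (hinv n t B) (hinv n t A)) = hone"
  proof -
    have "hmul n t (hmul n t A B) (hmul n t (hinv n t B) (hinv n t A))
        = hmul n t A (hmul n t B (hmul n t (hinv n t B) (hinv n t A)))"
      using hmul_assoc[OF A(1) B(1) BA] by simp
    also have "\<dots> = hmul n t A (hmul n t (hmul n t B (hinv n t B)) (hinv n t A))"
      using hmul_assoc[OF B(1) b(1) a(1)] by simp
    also have "\<dots> = hone" using b(2) hmul_hone_left[OF a(1)] a(2) by simp
    finally show ?thesis .
  qed
  have 2: "hmul n t (hmul n t (hinv n t B) (hinv n t A)) (hmul n t A B) = hone"
  proof -
    have "hmul n t (hmul n t (hinv n t B) (hinv n t A)) (hmul n t A B)
        = hmul n t (hinv n t B) (hmul n t (hinv n t A) (hmul n t A B))"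
      using hmul_assoc[OF b(1) a(1) AB] by simp
    also have "\<dots> = hmul n t (hinv n t B) (hmul n t (hmul n t (hinv n t A) A) B)"
      using hmul_assoc[OF a(1) A(1) B(1)] by simp
    also have "\<dots> = hone" using a(3) hmul_hone_left[OF B(1)] b(3) by simp
    finally show ?thesis .
  qed
  show "invertible n t (hmul n t A B)" unfolding invertible_def using BA 1 2 by blast
  show "hinv n t (hmul n t A B) = hmul n t (hinv n t B) (hinv n t A)"
    by (rule hinv_eq[OF AB BA 1 2])
qed

lemma hT_left:
  assumes a: "a \<in> Sn n" and i: "1 \<le> i" "i < n" and nd: "\<not> Dl i a"
  shows "hmul n t (hT (sref i)) (hT a) = hT (sref i \<circ> a)"
  using hmul_hT[OF sref_Sn[OF i], where t=t] hop_sref[OF i hT_Hn[OF a], where t=t] Lop_hT[OF a i nd, where t=t] by simp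

lemma hT_right:
  assumes a: "a \<in> Sn n" and k: "1 \<le> k" "k < n" and nd: "\<not> Dr k a"
  shows "hmul n t (hT a) (hT (sref k)) = hT (a \<circ> sref k)"
proof -
  have s: "hT (sref k) = Rop t k (hT id)" using Rop_hT[OF id_Sn k Dr_id, of t] by simp
  have "hmul n t (hT a) (hT (sref k)) = hop n t a (Rop t k (hT id))" using hmul_hT[OF a] s by simp
  also have "\<dots> = Rop t k (hop n t a (hT id))" by (rule rcommD[OF hop_props(2)[OF a] k hT_Hn[OF id_Sn]])
  also have "\<dots> = Rop t k (hT a)" using hop_props(3)[OF a, where t=t] by simp
  also have "\<dots> = hT (a \<circ> sref k)" by (rule Rop_hT[OF a k nd])
  finally show ?thesis .
qed

lemma hT_invertible:
  assumes w: "w \<in> Sn n" and ti: "t * ti = 1"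
  shows "invertible n t (hT w)"
  using w
proof (induction "plen n w" arbitrary: w rule: less_induct)
  case less
  show ?case
  proof (cases "w = id")
    case True
    then show ?thesis unfolding invertible_def
      using hone_Hn hmul_hone_left[OF hone_Hn] unfolding hone_def by blast
  next
    case False
    have wp: "w permutes {1..n}" using less.prems by (simp add: Sn_iff)
    obtain i where i: "1 \<le> i" "i < n" "Dl i w" using exists_Dl[OF wp False] by auto
    define w' where "w' = sref i \<circ> w"
    have w': "w' \<in> Sn n" unfolding w'_def using Sn_comp[OF sref_Sn[OF i(1,2)] less.prems] .
    have ww: "sref i \<circ> w' = w" unfolding w'_def by (simp add: o_assoc)
    have nd: "\<not> Dl i w'" unfolding w'_def using Dl_flip[OF wp i(1,2)] i(3) by simp
    have pl: "plen n w' < plen n w" unfolding w'_def using plen_sref_left[OF wp i(1,2)] i(3) by simp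
    have e: "hT w = hmul n t (hT (sref i)) (hT w')" using hT_left[OF w' i(1,2) nd, of t] ww by simp
    show ?thesis unfolding e
      by (rule mul_invertible(1)[OF hT_Hn[OF sref_Sn[OF i(1,2)]] hinv_sref(2)[OF i(1,2) ti]
            hT_Hn[OF w'] less.hyps[OF pl w']])
  qed
qed

lemma Tt_eq: assumes ti: "t * ti = 1" shows "(\<lambda>x. t * Tinv t ti i x) = Tt t i"
  unfolding Tinv_def Tt_def by (rule ext) (simp add: distrib_left mult.assoc[symmetric] ti)

lemma theta_Hn: "u \<in> Sn n \<Longrightarrow> t * ti = 1 \<Longrightarrow> theta n t u \<in> Hn n"
  unfolding theta_def
  by (rule smult_Hn, rule invertibleD(1)[OF hT_Hn hT_invertible]) (auto intro: Sn_inv)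

lemma theta_left:
  assumes u: "u \<in> Sn n" and j: "1 \<le> j" "j < n" and nd: "\<not> Dl j u" and ti: "t * ti = 1"
  shows "theta n t (sref j \<circ> u) = hmul n t (Tt t j) (theta n t u)"
proof -
  have up: "u permutes {1..n}" using u by (simp add: Sn_iff)
  have iu: "inv u \<in> Sn n" using Sn_inv[OF u] .
  have e1: "inv (sref j \<circ> u) = inv u \<circ> sref j"
    by (metis inv_sref o_inv_distrib permutes_bij[OF up] sref_def bij_transpose)
  have ndr: "\<not> Dr j (inv u)" using Dl_inv[OF permutes_inv[OF up], of j] nd
    by (simp add: permutes_inv_inv[OF up])
  have e2: "hT (inv (sref j \<circ> u)) = hmul n t (hT (inv u)) (hT (sref j))"
    unfolding e1 by (rule hT_right[OF iu j ndr, symmetric])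
  have H: "hinv n t (hT (inv (sref j \<circ> u))) = hmul n t (Tinv t ti j) (hinv n t (hT (inv u)))"
    unfolding e2 mul_invertible(2)[OF hT_Hn[OF iu] hT_invertible[OF iu ti] hT_Hn[OF sref_Sn[OF j]]
      hinv_sref(2)[OF j ti]] hinv_sref(1)[OF j ti] ..
  have pl: "plen n (sref j \<circ> u) = Suc (plen n u)" using plen_sref_left[OF up j] nd by simp
  have hi: "hinv n t (hT (inv u)) \<in> Hn n" using invertibleD(1)[OF hT_Hn[OF iu] hT_invertible[OF iu ti]] .
  show ?thesis
  proof (rule ext)
    fix x
    have "theta n t (sref j \<circ> u) x = t ^ plen n u * (t * hmul n t (Tinv t ti j) (hinv n t (hT (inv u))) x)"
      unfolding theta_def H pl by (simp add: algebra_simps)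
    also have "\<dots> = t ^ plen n u * hmul n t (Tt t j) (hinv n t (hT (inv u))) x"
      using hmul_smult_left[of n t t "Tinv t ti j"] Tt_eq[OF ti] by metis
    also have "\<dots> = hmul n t (Tt t j) (theta n t u) x"
      unfolding theta_def using linop_smult[OF hmul_linop[of n t "Tt t j"] hi, of "t ^ plen n u"] by metis
    finally show "theta n t (sref j \<circ> u) x = hmul n t (Tt t j) (theta n t u) x" .
  qed
qed

lemma theta_right:
  assumes u: "u \<in> Sn n" and k: "1 \<le> k" "k < n" and nd: "\<not> Dr k u" and ti: "t * ti = 1"
  shows "theta n t (u \<circ> sref k) = hmul n t (theta n t u) (Tt t k)"
proof -
  have up: "u permutes {1..n}" using u by (simp add: Sn_iff)
  have iu: "inv u \<in> Sn n" using Sn_inv[OF u] .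
  have e1: "inv (u \<circ> sref k) = sref k \<circ> inv u" by (rule inv_comp_sref[OF up])
  have ndl: "\<not> Dl k (inv u)" using Dl_inv[OF up, of k] nd by simp
  have e2: "hT (inv (u \<circ> sref k)) = hmul n t (hT (sref k)) (hT (inv u))"
    unfolding e1 by (rule hT_left[OF iu k ndl, symmetric])
  have H: "hinv n t (hT (inv (u \<circ> sref k))) = hmul n t (hinv n t (hT (inv u))) (Tinv t ti k)"
    unfolding e2 mul_invertible(2)[OF hT_Hn[OF sref_Sn[OF k]] hinv_sref(2)[OF k ti] hT_Hn[OF iu]
      hT_invertible[OF iu ti]] hinv_sref(1)[OF k ti] ..
  have pl: "plen n (u \<circ> sref k) = Suc (plen n u)" using plen_sref_right[OF up k] nd by simp
  have ii: "Tinv t ti k \<in> Hn n" using Tinv_Hn[OF k] .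
  show ?thesis
  proof (rule ext)
    fix x
    have "theta n t (u \<circ> sref k) x = t ^ plen n u * (t * hmul n t (hinv n t (hT (inv u))) (Tinv t ti k) x)"
      unfolding theta_def H pl by (simp add: algebra_simps)
    also have "\<dots> = t ^ plen n u * hmul n t (hinv n t (hT (inv u))) (Tt t k) x"
      using linop_smult[OF hmul_linop[of n t "hinv n t (hT (inv u))"] ii, of t] Tt_eq[OF ti] by metis
    also have "\<dots> = hmul n t (theta n t u) (Tt t k) x"
      unfolding theta_def using hmul_smult_left[of n t "t ^ plen n u" "hinv n t (hT (inv u))"] by metis
    finally show "theta n t (u \<circ> sref k) x = hmul n t (theta n t u) (Tt t k) x" .
  qed
qed

lemma Tt_mul:
  assumes i: "1 \<le> i" "i < n" and Z: "Z \<in> Hn n"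
  shows "hmul n t (Tt t i) Z = (\<lambda>x. Lop t i Z x + (1 - t) * Z x)"
proof -
  have "hmul n t (Tt t i) Z = (\<lambda>x. 1 * hmul n t (hT (sref i)) Z x + (1 - t) * hmul n t (hT id) Z x)"
    unfolding Tt_def by (rule hmul_lin_left)
  also have "\<dots> = (\<lambda>x. Lop t i Z x + (1 - t) * Z x)"
    using hmul_hT[OF sref_Sn[OF i], where t=t] hop_sref[OF i Z, where t=t] hmul_hone_left[OF Z, unfolded hone_def, where t=t] by simp
  finally show ?thesis .
qed



definition Rl :: "nat \<Rightarrow> nat list \<Rightarrow> nat list" where
  "Rl n G = sorted_list_of_set ({1..n} - set G)"

lemma sls_strict: "finite A \<Longrightarrow> sorted_wrt (<) (sorted_list_of_set A)"
  by (simp add: strict_sorted_iff)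

lemma sls_set: "sorted_wrt (<) G \<Longrightarrow> sorted_list_of_set (set G) = G"
  using strict_sorted_equal[of G "sorted_list_of_set (set G)"] sls_strict[of "set G"] by simp

lemma cols_facts:
  assumes "G \<in> cols n l"
  shows "sorted_wrt (<) G" "distinct G" "length G = l" "set G \<subseteq> {1..n}" "l \<le> n" "card (set G) = l"
proof -
  show sG: "sorted_wrt (<) G" "length G = l" "set G \<subseteq> {1..n}" using assms unfolding cols_def by auto
  then show dG: "distinct G" by (simp add: strict_sorted_iff)
  show "card (set G) = l" using dG sG by (simp add: distinct_card)
  then show "l \<le> n" using card_mono[OF _ sG(3)] by simp
qed

lemma Rl_facts:
  assumes "G \<in> cols n l"
  shows "sorted_wrt (<) (Rl n G)" "set (Rl n G) = {1..n} - set G" "length (Rl n G) = n - l"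
proof -
  note c = cols_facts[OF assms]
  show "sorted_wrt (<) (Rl n G)" unfolding Rl_def by (rule sls_strict) simp
  show "set (Rl n G) = {1..n} - set G" unfolding Rl_def by simp
  have "card ({1..n} - set G) = n - l" using c by (simp add: card_Diff_subset)
  then show "length (Rl n G) = n - l" unfolding Rl_def by simp
qed

lemma ucol_lo: assumes G: "G \<in> cols n l" shows "1 \<le> k \<Longrightarrow> k \<le> l \<Longrightarrow> ucol n G k = G ! (k - 1)"
  unfolding ucol_def using cols_facts(3)[OF G] by auto

lemma ucol_hi: assumes G: "G \<in> cols n l" shows "l < k \<Longrightarrow> k \<le> n \<Longrightarrow> ucol n G k = Rl n G ! (k - l - 1)"
  unfolding ucol_def Rl_def using cols_facts(3)[OF G] by auto

lemma ucol_out: assumes G: "G \<in> cols n l" shows "k \<notin> {1..n} \<Longrightarrow> ucol n G k = k"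
  unfolding ucol_def using cols_facts(3,5)[OF G] by auto

lemma map_lo: assumes G: "G \<in> cols n l" shows "map (ucol n G) [1..<Suc l] = G"
  by (rule nth_equalityI) (auto simp del: upt_Suc simp: cols_facts(3)[OF G] ucol_lo[OF G] nth_upt)

lemma map_hi: assumes G: "G \<in> cols n l" shows "map (ucol n G) [Suc l..<Suc n] = Rl n G"
  by (rule nth_equalityI)
    (auto simp del: upt_Suc simp: cols_facts(5)[OF G] Rl_facts(3)[OF G] ucol_hi[OF G] nth_upt)

lemma ucol_image_lo: assumes G: "G \<in> cols n l" shows "ucol n G ` {1..l} = set G"
proof -
  have "ucol n G ` {1..<Suc l} = set G" using arg_cong[OF map_lo[OF G], of set] by (simp only: set_map set_upt)
  moreover have "{1..<Suc l} = {1..l}" by auto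
  ultimately show ?thesis by simp
qed

lemma ucol_image_hi: assumes G: "G \<in> cols n l" shows "ucol n G ` {Suc l..n} = {1..n} - set G"
proof -
  have "ucol n G ` {Suc l..<Suc n} = set (Rl n G)" using arg_cong[OF map_hi[OF G], of set] by (simp only: set_map set_upt)
  moreover have "{Suc l..<Suc n} = {Suc l..n}" by auto
  ultimately show ?thesis using Rl_facts(2)[OF G] by simp
qed

lemma ucol_permutes:
  assumes G: "G \<in> cols n l"
  shows "ucol n G permutes {1..n}"
proof (rule inj_imp_permutes)
  note c = cols_facts[OF G]
  have split: "[1..<Suc n] = [1..<Suc l] @ [Suc l..<Suc n]"
    using upt_add_eq_append[of 1 "Suc l" "n - l"] c(5) by simp
  have "map (ucol n G) [1..<Suc n] = G @ Rl n G" unfolding split using map_lo[OF G] map_hi[OF G] by simp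
  moreover have "distinct (G @ Rl n G)" using c(2) Rl_facts[OF G] by (auto simp: strict_sorted_iff)
  ultimately have "distinct (map (ucol n G) [1..<Suc n])" by simp
  then have "inj_on (ucol n G) (set [1..<Suc n])" by (simp only: distinct_map)
  moreover have "set [1..<Suc n] = {1..n}" by auto
  ultimately show "inj_on (ucol n G) {1..n}" by simp
  show "finite {1..n}" by simp
  fix x
  show "x \<in> {1..n} \<Longrightarrow> ucol n G x \<in> {1..n}"
  proof -
    assume x: "x \<in> {1..n}"
    show ?thesis
    proof (cases "x \<le> l")
      case True
      then have "ucol n G x \<in> set G" using ucol_image_lo[OF G] x by auto
      then show ?thesis using c(4) by auto
    next
      case False
      then have "ucol n G x \<in> {1..n} - set G" using ucol_image_hi[OF G] x by auto
      then show ?thesis by auto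
    qed
  qed
  show "x \<notin> {1..n} \<Longrightarrow> ucol n G x = x" by (rule ucol_out[OF G])
qed

lemma ucol_Sn: "G \<in> cols n l \<Longrightarrow> ucol n G \<in> Sn n"
  using ucol_permutes by (simp add: Sn_iff)

definition sameblk :: "nat \<Rightarrow> nat \<Rightarrow> nat \<Rightarrow> bool" where
  "sameblk l a b \<longleftrightarrow> (a \<le> l \<longleftrightarrow> b \<le> l)"

definition blockmono :: "nat \<Rightarrow> nat \<Rightarrow> perm \<Rightarrow> bool" where
  "blockmono n l w \<longleftrightarrow> (\<forall>a b. 1 \<le> a \<longrightarrow> a < b \<longrightarrow> b \<le> n \<longrightarrow> sameblk l a b \<longrightarrow> w a < w b)"

lemma ucol_blockmono:
  assumes G: "G \<in> cols n l"
  shows "blockmono n l (ucol n G)"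
  unfolding blockmono_def sameblk_def
proof (intro allI impI)
  fix a b assume ab: "1 \<le> a" "a < b" "b \<le> n" "(a \<le> l) = (b \<le> l)"
  note c = cols_facts[OF G] and r = Rl_facts[OF G]
  show "ucol n G a < ucol n G b"
  proof (cases "b \<le> l")
    case True
    then show ?thesis using ab ucol_lo[OF G] sorted_wrt_nth_less[OF c(1), of "a - 1" "b - 1"] c(3) by auto
  next
    case False
    then show ?thesis using ab ucol_hi[OF G] sorted_wrt_nth_less[OF r(1), of "a - l - 1" "b - l - 1"] r(3)
      by auto
  qed
qed

lemma map_sorted_eq:
  fixes L :: "nat list" and w :: perm
  assumes "sorted_wrt (<) L" "set L = w ` {a..b}" "\<And>x y. a \<le> x \<Longrightarrow> x < y \<Longrightarrow> y \<le> b \<Longrightarrow> w x < w y"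
  shows "map w [a..<Suc b] = L"
proof -
  have s1: "sorted_wrt (<) (map w [a..<Suc b])"
    unfolding sorted_wrt_map by (rule sorted_wrt_mono_rel[of _ "(<)"]) (auto simp: assms(3) simp del: upt_Suc)
  have "{a..<Suc b} = {a..b}" by auto
  moreover have "set (map w [a..<Suc b]) = w ` {a..<Suc b}" by (simp only: set_map set_upt)
  ultimately have s2: "set (map w [a..<Suc b]) = set L" using assms(2) by simp
  show ?thesis using strict_sorted_equal[of L "map w [a..<Suc b]"] assms(1) s1 s2 by simp
qed

lemma ucol_char:
  assumes G: "G \<in> cols n l" and w: "w permutes {1..n}" and img: "w ` {1..l} = set G"
    and bm: "blockmono n l w"
  shows "w = ucol n G"
proof
  fix k
  note c = cols_facts[OF G]
  have lo: "map w [1..<Suc l] = G"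
  proof (rule map_sorted_eq[OF c(1) img[symmetric]])
    fix x y assume "1 \<le> x" "x < y" "y \<le> l"
    then show "w x < w y" using bm c(5) unfolding blockmono_def sameblk_def by auto
  qed
  have imghi: "w ` {Suc l..n} = {1..n} - set G"
  proof -
    have "w ` {1..n} = {1..n}" using permutes_image[OF w] .
    moreover have "{1..n} = {1..l} \<union> {Suc l..n}" using c(5) by auto
    ultimately have U: "w ` {1..l} \<union> w ` {Suc l..n} = {1..n}" by (metis image_Un)
    moreover have D: "w ` {1..l} \<inter> w ` {Suc l..n} = {}"
      using permutes_inj[OF w] by (auto simp: inj_eq)
    show ?thesis
    proof (rule set_eqI)
      fix x
      show "x \<in> w ` {Suc l..n} \<longleftrightarrow> x \<in> {1..n} - set G"
        using U D img by (metis Diff_iff Un_iff disjoint_iff)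
    qed
  qed
  have hi: "map w [Suc l..<Suc n] = Rl n G"
  proof (rule map_sorted_eq[OF Rl_facts(1)[OF G]])
    show "set (Rl n G) = w ` {Suc l..n}" using imghi Rl_facts(2)[OF G] by simp
    fix x y assume "Suc l \<le> x" "x < y" "y \<le> n"
    then show "w x < w y" using bm unfolding blockmono_def sameblk_def by auto
  qed
  show "w k = ucol n G k"
  proof (cases "k \<in> {1..n}")
    case False
    then show ?thesis using permutes_not_in[OF w] ucol_out[OF G] by simp
  next
    case True
    show ?thesis
    proof (cases "k \<le> l")
      case True
      have k1: "1 \<le> k" using \<open>k \<in> {1..n}\<close> by simp
      have "map w [1..<Suc l] ! (k - 1) = w (1 + (k - 1))" by (rule nth_map_upt) (use True k1 in simp)
      then have "w k = G ! (k - 1)" using lo k1 by simp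
      then show ?thesis using ucol_lo[OF G] True \<open>k \<in> {1..n}\<close> by simp
    next
      case False
      have kn: "k \<le> n" using \<open>k \<in> {1..n}\<close> by simp
      have "map w [Suc l..<Suc n] ! (k - l - 1) = w (Suc l + (k - l - 1))"
        by (rule nth_map_upt) (use False kn in simp)
      then have "w k = Rl n G ! (k - l - 1)" using hi False by simp
      then show ?thesis using ucol_hi[OF G] False \<open>k \<in> {1..n}\<close> by simp
    qed
  qed
qed



lemma sref_range: "1 \<le> j \<Longrightarrow> j < n \<Longrightarrow> x \<in> {1..n} \<Longrightarrow> sref j x \<in> {1..n}"
  using permutes_in_image[OF sref_permutes] by blast

lemma sref_inj: "sref j x = sref j y \<longleftrightarrow> x = y"
  by (metis sref_sref_app)

lemma scol_facts:
  assumes G: "G \<in> cols n l" and j: "1 \<le> j" "j < n"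
  shows "scol j G \<in> cols n l" "set (scol j G) = sref j ` set G"
proof -
  note c = cols_facts[OF G]
  show s: "set (scol j G) = sref j ` set G" unfolding scol_def by simp
  have "card (sref j ` set G) = l" using c(6) card_image[of "sref j" "set G"]
    by (simp add: inj_on_def sref_inj)
  moreover have "sref j ` set G \<subseteq> {1..n}" using c(4) sref_range[OF j] by blast
  ultimately show "scol j G \<in> cols n l" unfolding cols_def scol_def
    by (simp add: sls_strict)
qed

lemma scol_invol:
  assumes G: "G \<in> cols n l" and j: "1 \<le> j" "j < n"
  shows "scol j (scol j G) = G"
proof -
  have "set (scol j (scol j G)) = set G"
    using scol_facts(2)[OF scol_facts(1)[OF G j] j] scol_facts(2)[OF G j] by (simp add: image_image)
  then show ?thesis unfolding scol_def[of j "scol j G"] using sls_set[OF cols_facts(1)[OF G]]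
    scol_facts(2)[OF scol_facts(1)[OF G j] j] by (metis scol_def)
qed

lemma scol_fix:
  assumes G: "G \<in> cols n l" and j: "1 \<le> j" "j < n" and f: "j \<in> set G \<longleftrightarrow> Suc j \<in> set G"
  shows "scol j G = G"
proof -
  have "sref j ` set G = set G"
  proof (rule set_eqI)
    fix x show "x \<in> sref j ` set G \<longleftrightarrow> x \<in> set G"
      using f unfolding sref_def transpose_def by (auto simp: image_iff)
  qed
  then show ?thesis unfolding scol_def using sls_set[OF cols_facts(1)[OF G]] by simp
qed

lemma ucol_in_G:
  assumes G: "G \<in> cols n l" and x: "x \<in> {1..n}"
  shows "ucol n G x \<in> set G \<longleftrightarrow> x \<le> l"
proof -
  have "x \<le> l \<Longrightarrow> ucol n G x \<in> set G" using ucol_image_lo[OF G] x by auto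
  moreover have "\<not> x \<le> l \<Longrightarrow> ucol n G x \<notin> set G" using ucol_image_hi[OF G] x by auto
  ultimately show ?thesis by blast
qed

lemma inv_ucol_facts:
  assumes G: "G \<in> cols n l" and y: "y \<in> {1..n}"
  shows "inv (ucol n G) y \<in> {1..n}" "ucol n G (inv (ucol n G) y) = y"
    "inv (ucol n G) y \<le> l \<longleftrightarrow> y \<in> set G"
proof -
  have p: "ucol n G permutes {1..n}" using ucol_permutes[OF G] .
  show a: "inv (ucol n G) y \<in> {1..n}" using permutes_in_image[OF permutes_inv[OF p]] y by simp
  show b: "ucol n G (inv (ucol n G) y) = y" using permutes_inverses(1)[OF p] by simp
  show "inv (ucol n G) y \<le> l \<longleftrightarrow> y \<in> set G" using ucol_in_G[OF G a] b by simp
qed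

lemma ucol_swap:
  assumes G: "G \<in> cols n l" and j: "1 \<le> j" "j < n" and jin: "j \<in> set G" and jout: "Suc j \<notin> set G"
  shows "sref j \<circ> ucol n G = ucol n (scol j G)" "\<not> Dl j (ucol n G)"
proof -
  define u where "u = ucol n G"
  have up: "u permutes {1..n}" unfolding u_def by (rule ucol_permutes[OF G])
  have G': "scol j G \<in> cols n l" using scol_facts(1)[OF G j] .
  have wp: "sref j \<circ> u permutes {1..n}" using permutes_compose[OF up sref_permutes[OF j]] .
  have img: "(sref j \<circ> u) ` {1..l} = set (scol j G)"
    unfolding image_comp[symmetric] u_def ucol_image_lo[OF G] scol_facts(2)[OF G j] ..
  have bm: "blockmono n l (sref j \<circ> u)"
    unfolding blockmono_def
  proof (intro allI impI)
    fix a b assume ab: "1 \<le> a" "a < b" "b \<le> n" "sameblk l a b"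
    have lt: "u a < u b" using ucol_blockmono[OF G] ab unfolding blockmono_def u_def by blast
    have ne: "u a \<noteq> u b" using lt by simp
    have "(u a \<in> set G) = (u b \<in> set G)" using ucol_in_G[OF G, of a] ucol_in_G[OF G, of b] ab
      unfolding u_def sameblk_def by auto
    then have "\<not> (u a = j \<and> u b = Suc j)" "\<not> (u a = Suc j \<and> u b = j)" using jin jout by auto
    then show "(sref j \<circ> u) a < (sref j \<circ> u) b" using sref_less[OF ne, of j] lt by simp
  qed
  show "sref j \<circ> ucol n G = ucol n (scol j G)" using ucol_char[OF G' wp img bm] unfolding u_def .
  have jr: "j \<in> {1..n}" "Suc j \<in> {1..n}" using j by auto
  have "inv u j \<le> l" "\<not> inv u (Suc j) \<le> l"
    using inv_ucol_facts(3)[OF G jr(1)] inv_ucol_facts(3)[OF G jr(2)] jin jout unfolding u_def by auto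
  then show "\<not> Dl j (ucol n G)" unfolding Dl_def u_def[symmetric] by simp
qed

lemma ucol_swap2:
  assumes G: "G \<in> cols n l" and j: "1 \<le> j" "j < n" and jout: "j \<notin> set G" and jin: "Suc j \<in> set G"
  shows "ucol n G = sref j \<circ> ucol n (scol j G)" "\<not> Dl j (ucol n (scol j G))"
proof -
  have G': "scol j G \<in> cols n l" using scol_facts(1)[OF G j] .
  have s: "set (scol j G) = sref j ` set G" using scol_facts(2)[OF G j] .
  have a: "j \<in> set (scol j G)" unfolding s using jin by (force simp: sref_def)
  have b: "Suc j \<notin> set (scol j G)" unfolding s using jout
    by (auto simp: sref_def transpose_def split: if_splits)
  note sw = ucol_swap[OF G' j a b]
  show "ucol n G = sref j \<circ> ucol n (scol j G)" using sw(1) scol_invol[OF G j] by simp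
  show "\<not> Dl j (ucol n (scol j G))" by (rule sw(2))
qed

lemma ucol_fixed:
  assumes G: "G \<in> cols n l" and j: "1 \<le> j" "j < n" and f: "j \<in> set G \<longleftrightarrow> Suc j \<in> set G"
  obtains k where "1 \<le> k" "k < n" "k \<noteq> l" "sref j \<circ> ucol n G = ucol n G \<circ> sref k"
    "\<not> Dl j (ucol n G)" "\<not> Dr k (ucol n G)"
    "inv (ucol n G) j = k" "inv (ucol n G) (Suc j) = Suc k"
proof -
  define u where "u = ucol n G"
  have up: "u permutes {1..n}" unfolding u_def by (rule ucol_permutes[OF G])
  have jr: "j \<in> {1..n}" "Suc j \<in> {1..n}" using j by auto
  define k where "k = inv u j"
  define k' where "k' = inv u (Suc j)"
  have kr: "k \<in> {1..n}" "k' \<in> {1..n}" "u k = j" "u k' = Suc j"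
    using inv_ucol_facts(1,2)[OF G jr(1)] inv_ucol_facts(1,2)[OF G jr(2)] unfolding k_def k'_def u_def by auto
  have sb: "k \<le> l \<longleftrightarrow> k' \<le> l"
    using inv_ucol_facts(3)[OF G jr(1)] inv_ucol_facts(3)[OF G jr(2)] f unfolding k_def k'_def u_def by auto
  have bm: "\<And>a b. 1 \<le> a \<Longrightarrow> a < b \<Longrightarrow> b \<le> n \<Longrightarrow> (a \<le> l \<longleftrightarrow> b \<le> l) \<Longrightarrow> u a < u b"
    using ucol_blockmono[OF G] unfolding blockmono_def sameblk_def u_def by blast
  have "k < k'"
  proof (rule ccontr)
    assume "\<not> k < k'"
    moreover have "k \<noteq> k'" using kr by auto
    ultimately have "k' < k" by simp
    then have "u k' < u k" using bm[of k' k] kr sb by auto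
    then show False using kr by simp
  qed
  have kk: "k' = Suc k"
  proof (rule ccontr)
    assume "k' \<noteq> Suc k"
    then have lt: "Suc k < k'" using \<open>k < k'\<close> by simp
    have "(Suc k \<le> l) = (k \<le> l)" using sb lt by auto
    then have "u k < u (Suc k)" "u (Suc k) < u k'" using bm[of k "Suc k"] bm[of "Suc k" k'] kr lt sb by auto
    then show False using kr by simp
  qed
  have k1: "1 \<le> k" "k < n" using kr kk by auto
  have kl: "k \<noteq> l" using sb kk by auto
  have "{u k, u (Suc k)} = {j, Suc j}" using kr kk by simp
  note sc = special_case[OF up this]
  have ndr: "\<not> Dr k u" unfolding Dr_def using kr kk by simp
  have ndl: "\<not> Dl j u" unfolding Dl_def using k_def k'_def kk by simp
  show ?thesis
    using that[OF k1 kl sc(1)[unfolded u_def] ndl[unfolded u_def] ndr[unfolded u_def]]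
      k_def k'_def kk unfolding u_def by simp
qed

lemma Stab_Sn: "v \<in> Stab n l \<Longrightarrow> v \<in> Sn n"
  unfolding Stab_def by simp

lemma Stab_blk:
  assumes v: "v \<in> Stab n l" and x: "x \<in> {1..n}" and l: "l \<le> n"
  shows "v x \<le> l \<longleftrightarrow> x \<le> l" "inv v x \<le> l \<longleftrightarrow> x \<le> l" "v x \<in> {1..n}" "inv v x \<in> {1..n}"
proof -
  have vp: "v permutes {1..n}" using v unfolding Stab_def Sn_def by simp
  have im: "v ` {1..l} = {1..l}" using v unfolding Stab_def by simp
  show vx: "v x \<in> {1..n}" using permutes_in_image[OF vp] x by simp
  show ivx: "inv v x \<in> {1..n}" using permutes_in_image[OF permutes_inv[OF vp]] x by simp
  have a: "x \<le> l \<Longrightarrow> v x \<le> l" using im x by auto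
  have b: "v x \<le> l \<Longrightarrow> x \<le> l"
  proof -
    assume "v x \<le> l"
    then have "v x \<in> v ` {1..l}" using im vx by simp
    then show "x \<le> l" using permutes_inj[OF vp] by (auto simp: inj_eq)
  qed
  show "v x \<le> l \<longleftrightarrow> x \<le> l" using a b by blast
  have e: "v (inv v x) = x" using permutes_inverses(1)[OF vp] by simp
  have a2: "inv v x \<le> l \<Longrightarrow> x \<le> l" using im e ivx by (metis atLeastAtMost_iff image_eqI)
  have b2: "x \<le> l \<Longrightarrow> inv v x \<le> l"
  proof -
    assume "x \<le> l"
    then have "x \<in> v ` {1..l}" using im x by simp
    then obtain y where "y \<in> {1..l}" "x = v y" by auto
    then show "inv v x \<le> l" using permutes_inverses(2)[OF vp] by simp
  qed
  show "inv v x \<le> l \<longleftrightarrow> x \<le> l" using a2 b2 by blast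
qed

lemma sref_Stab: "1 \<le> k \<Longrightarrow> k < n \<Longrightarrow> k \<noteq> l \<Longrightarrow> sref k \<in> Stab n l"
  unfolding Stab_def using sref_Sn[of k n]
  by (auto simp: sref_def transpose_def image_iff)

lemma Stab_comp: assumes "u \<in> Stab n l" "v \<in> Stab n l" shows "u \<circ> v \<in> Stab n l"
proof -
  have "(u \<circ> v) ` {1..l} = u ` (v ` {1..l})" by (rule image_comp[symmetric])
  also have "\<dots> = {1..l}" using assms unfolding Stab_def by simp
  moreover have "u \<circ> v \<in> Sn n" using assms Sn_comp[of u n v] unfolding Stab_def by simp
  ultimately show ?thesis unfolding Stab_def by simp
qed

lemma Stab_id: "id \<in> Stab n l"
  unfolding Stab_def by simp

lemma Dl_ucol_Stab:
  assumes G: "G \<in> cols n l" and v: "v \<in> Stab n l" and j: "1 \<le> j" "j < n"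
    and ex: "(j \<in> set G) \<noteq> (Suc j \<in> set G)"
  shows "Dl j (ucol n G \<circ> v) \<longleftrightarrow> Suc j \<in> set G"
proof -
  have l: "l \<le> n" using cols_facts(5)[OF G] .
  have up: "ucol n G permutes {1..n}" using ucol_permutes[OF G] .
  have vp: "v permutes {1..n}" using v unfolding Stab_def Sn_def by simp
  have e: "inv (ucol n G \<circ> v) = inv v \<circ> inv (ucol n G)"
    using o_inv_distrib permutes_bij[OF up] permutes_bij[OF vp] by blast
  have jr: "j \<in> {1..n}" "Suc j \<in> {1..n}" using j by auto
  note a = inv_ucol_facts[OF G jr(1)] and b = inv_ucol_facts[OF G jr(2)]
  have A: "inv v (inv (ucol n G) j) \<le> l \<longleftrightarrow> j \<in> set G" using Stab_blk(2)[OF v a(1) l] a(3) by simp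
  have B: "inv v (inv (ucol n G) (Suc j)) \<le> l \<longleftrightarrow> Suc j \<in> set G" using Stab_blk(2)[OF v b(1) l] b(3) by simp
  show ?thesis unfolding Dl_def e using A B ex by auto
qed



lemma plen_subadd:
  assumes u: "u \<in> Sn n" and v: "v \<in> Sn n"
  shows "plen n (u \<circ> v) \<le> plen n u + plen n v"
  using v
proof (induction "plen n v" arbitrary: v rule: less_induct)
  case less
  show ?case
  proof (cases "v = id")
    case True then show ?thesis by simp
  next
    case False
    have vp: "v permutes {1..n}" using less.prems by (simp add: Sn_iff)
    obtain k where k: "1 \<le> k" "k < n" "Dr k v" using exists_Dr[OF vp False] by auto
    define v' where "v' = v \<circ> sref k"
    have v': "v' \<in> Sn n" unfolding v'_def using Sn_comp[OF less.prems sref_Sn[OF k(1,2)]] .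
    have vv: "v = v' \<circ> sref k" unfolding v'_def by (simp add: o_assoc[symmetric])
    have pl: "plen n v = Suc (plen n v')"
      using plen_sref_right[OF vp k(1,2)] k(3) unfolding v'_def by simp
    have IH: "plen n (u \<circ> v') \<le> plen n u + plen n v'" using less.hyps[OF _ v'] pl by simp
    have uv': "u \<circ> v' permutes {1..n}" using Sn_comp[OF u v'] by (simp add: Sn_iff)
    have "plen n (u \<circ> v) = plen n ((u \<circ> v') \<circ> sref k)" unfolding vv by (simp add: o_assoc)
    also have "\<dots> \<le> Suc (plen n (u \<circ> v'))" using plen_sref_right(1)[OF uv' k(1,2)]
      by (cases "Dr k (u \<circ> v')") auto
    finally show ?thesis using IH pl by simp
  qed
qed

lemma hop_hT_add:
  assumes u: "u \<in> Sn n" and v: "v \<in> Sn n" and add: "plen n (u \<circ> v) = plen n u + plen n v"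
  shows "hop n t u (hT v) = hT (u \<circ> v)"
  using v add
proof (induction "plen n v" arbitrary: v rule: less_induct)
  case less
  show ?case
  proof (cases "v = id")
    case True then show ?thesis using hop_props(3)[OF u, where t=t] by simp
  next
    case False
    have vp: "v permutes {1..n}" using less.prems by (simp add: Sn_iff)
    obtain k where k: "1 \<le> k" "k < n" "Dr k v" using exists_Dr[OF vp False] by auto
    define v' where "v' = v \<circ> sref k"
    have v': "v' \<in> Sn n" unfolding v'_def using Sn_comp[OF less.prems(1) sref_Sn[OF k(1,2)]] .
    have v'p: "v' permutes {1..n}" using v' by (simp add: Sn_iff)
    have vv: "v = v' \<circ> sref k" unfolding v'_def by (simp add: o_assoc[symmetric])
    have ndv': "\<not> Dr k v'" unfolding v'_def using Dr_flip[OF vp] k(3) by simp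
    have pl: "plen n v = Suc (plen n v')"
      using plen_sref_right[OF vp k(1,2)] k(3) unfolding v'_def by simp
    have uv': "u \<circ> v' permutes {1..n}" using Sn_comp[OF u v'] by (simp add: Sn_iff)
    have e: "u \<circ> v = (u \<circ> v') \<circ> sref k" unfolding vv by (simp add: o_assoc)
    have le1: "plen n (u \<circ> v) \<le> Suc (plen n (u \<circ> v'))"
      unfolding e using plen_sref_right(1)[OF uv' k(1,2)] by (cases "Dr k (u \<circ> v')") auto
    have le2: "plen n (u \<circ> v') \<le> plen n u + plen n v'" using plen_subadd[OF u v'] .
    have add': "plen n (u \<circ> v') = plen n u + plen n v'" using le1 le2 less.prems(2) pl by simp
    have nd: "\<not> Dr k (u \<circ> v')"
    proof
      assume "Dr k (u \<circ> v')"
      then have "plen n (u \<circ> v) = plen n (u \<circ> v') - 1"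
        unfolding e using plen_sref_right(1)[OF uv' k(1,2)] by simp
      then show False using add' less.prems(2) pl by simp
    qed
    have IH: "hop n t u (hT v') = hT (u \<circ> v')" using less.hyps[OF _ v' add'] pl by simp
    have hv: "hT v = Rop t k (hT v')" using Rop_hT[OF v' k(1,2) ndv', of t] vv by simp
    have "hop n t u (hT v) = Rop t k (hop n t u (hT v'))"
      unfolding hv by (rule rcommD[OF hop_props(2)[OF u] k(1,2) hT_Hn[OF v']])
    also have "\<dots> = hT (u \<circ> v)" unfolding IH e by (rule Rop_hT[OF Sn_comp[OF u v'] k(1,2) nd])
    finally show ?thesis .
  qed
qed

lemma plen_ucol_Stab:
  assumes G: "G \<in> cols n l" and v: "v \<in> Stab n l"
  shows "plen n (ucol n G \<circ> v) = plen n (ucol n G) + plen n v"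
  using v
proof (induction "plen n v" arbitrary: v rule: less_induct)
  case less
  have l: "l \<le> n" using cols_facts(5)[OF G] .
  show ?case
  proof (cases "v = id")
    case True then show ?thesis by simp
  next
    case False
    have vS: "v \<in> Sn n" using Stab_Sn[OF less.prems] .
    have vp: "v permutes {1..n}" using vS by (simp add: Sn_iff)
    obtain k where k: "1 \<le> k" "k < n" "Dr k v" using exists_Dr[OF vp False] by auto
    have kl: "k \<noteq> l"
    proof
      assume "k = l"
      then have "v k \<le> l" "\<not> v (Suc k) \<le> l"
        using Stab_blk(1)[OF less.prems _ l, of k] Stab_blk(1)[OF less.prems _ l, of "Suc k"] k by auto
      then show False using k(3) unfolding Dr_def by simp
    qed
    define v' where "v' = v \<circ> sref k"
    have v': "v' \<in> Stab n l" unfolding v'_def using Stab_comp[OF less.prems sref_Stab[OF k(1,2) kl]] .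
    have v'S: "v' \<in> Sn n" using Stab_Sn[OF v'] .
    have vv: "v = v' \<circ> sref k" unfolding v'_def by (simp add: o_assoc[symmetric])
    have ndv': "\<not> Dr k v'" unfolding v'_def using Dr_flip[OF vp] k(3) by simp
    have pl: "plen n v = Suc (plen n v')"
      using plen_sref_right[OF vp k(1,2)] k(3) unfolding v'_def by simp
    define u where "u = ucol n G"
    have uS: "u \<in> Sn n" unfolding u_def using ucol_Sn[OF G] .
    have uv': "u \<circ> v' permutes {1..n}" using Sn_comp[OF uS v'S] by (simp add: Sn_iff)
    have e: "u \<circ> v = (u \<circ> v') \<circ> sref k" unfolding vv by (simp add: o_assoc)
    have kr: "k \<in> {1..n}" "Suc k \<in> {1..n}" using k by auto
    have sb: "v' k \<le> l \<longleftrightarrow> v' (Suc k) \<le> l"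
      using Stab_blk(1)[OF v' kr(1) l] Stab_blk(1)[OF v' kr(2) l] kl by auto
    have r: "v' k \<in> {1..n}" "v' (Suc k) \<in> {1..n}" using Stab_blk(3)[OF v' _ l] kr by auto
    have lt: "v' k < v' (Suc k)"
      using ndv' perm_facts(3)[OF permutes_compose[OF sref_permutes[OF k(1,2)] vp], of k "Suc k"]
      unfolding Dr_def v'_def by auto
    have "u (v' k) < u (v' (Suc k))"
      using ucol_blockmono[OF G] r lt sb unfolding blockmono_def sameblk_def u_def by auto
    then have nd: "\<not> Dr k (u \<circ> v')" unfolding Dr_def by simp
    have IH: "plen n (u \<circ> v') = plen n u + plen n v'" using less.hyps[OF _ v'] pl u_def by simp
    have "plen n (u \<circ> v) = Suc (plen n (u \<circ> v'))"
      unfolding e using plen_sref_right(1)[OF uv' k(1,2)] nd by simp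
    then show ?thesis using IH pl u_def by simp
  qed
qed

definition colof :: "nat \<Rightarrow> perm \<Rightarrow> nat list" where
  "colof l x = sorted_list_of_set (x ` {1..l})"

lemma colof_facts:
  assumes x: "x \<in> Sn n" and l: "l \<le> n"
  shows "colof l x \<in> cols n l" "inv (ucol n (colof l x)) \<circ> x \<in> Stab n l"
proof -
  have xp: "x permutes {1..n}" using x by (simp add: Sn_iff)
  have sub: "x ` {1..l} \<subseteq> {1..n}" using permutes_image[OF xp] l by auto
  have card: "card (x ` {1..l}) = l"
    using card_image[OF permutes_inj_on[OF xp, of "{1..l}"]] l by auto
  show G: "colof l x \<in> cols n l" unfolding cols_def colof_def using sub card by (simp add: sls_strict)
  have setG: "set (colof l x) = x ` {1..l}" unfolding colof_def by simp
  define u where "u = ucol n (colof l x)"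
  have up: "u permutes {1..n}" unfolding u_def by (rule ucol_permutes[OF G])
  have uim: "u ` {1..l} = x ` {1..l}" unfolding u_def ucol_image_lo[OF G] setG ..
  have "(inv u \<circ> x) ` {1..l} = inv u ` (u ` {1..l})" unfolding uim by (simp add: image_comp)
  also have "\<dots> = {1..l}" using permutes_inverses(2)[OF up] by (simp add: image_comp)
  finally have im: "(inv u \<circ> x) ` {1..l} = {1..l}" .
  have "inv u \<circ> x \<in> Sn n" using Sn_comp[OF Sn_inv[OF ucol_Sn[OF G]] x] unfolding u_def .
  then show "inv (ucol n (colof l x)) \<circ> x \<in> Stab n l" using im unfolding Stab_def u_def by simp
qed

lemma colof_unique:
  assumes G: "G \<in> cols n l" and v: "v \<in> Stab n l"
  shows "colof l (ucol n G \<circ> v) = G"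
proof -
  have "(ucol n G \<circ> v) ` {1..l} = ucol n G ` (v ` {1..l})" by (simp add: image_comp)
  also have "\<dots> = set G" using v ucol_image_lo[OF G] unfolding Stab_def by simp
  finally show ?thesis unfolding colof_def using sls_set[OF cols_facts(1)[OF G]] by simp
qed

lemma inv_Stab_iff:
  assumes G: "G \<in> cols n l" and x: "x \<in> Sn n"
  shows "inv (ucol n G) \<circ> x \<in> Stab n l \<longleftrightarrow> colof l x = G"
proof
  have up: "ucol n G permutes {1..n}" using ucol_permutes[OF G] .
  have e: "ucol n G \<circ> (inv (ucol n G) \<circ> x) = x"
    using permutes_inverses(1)[OF up] by (simp add: o_def)
  show "inv (ucol n G) \<circ> x \<in> Stab n l \<Longrightarrow> colof l x = G"
    using colof_unique[OF G] e by metis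
  show "colof l x = G \<Longrightarrow> inv (ucol n G) \<circ> x \<in> Stab n l"
    using colof_facts(2)[OF x cols_facts(5)[OF G]] by simp
qed

lemma finite_cols: "finite (cols n l)"
proof -
  have "cols n l \<subseteq> {xs. set xs \<subseteq> {1..n} \<and> length xs = l}" unfolding cols_def by auto
  moreover have "finite {xs. set xs \<subseteq> {1..n} \<and> length xs = l}" by (rule finite_lists_length_eq) simp
  ultimately show ?thesis by (rule finite_subset)
qed

lemma sum_single:
  assumes "finite A" "a \<in> A" "\<And>x. x \<in> A \<Longrightarrow> x \<noteq> a \<Longrightarrow> f x = 0"
  shows "sum f A = f a"
proof -
  have "sum f A = f a + sum f (A - {a})" using assms(1,2) by (rule sum.remove)
  moreover have "sum f (A - {a}) = 0" using assms(3) by (intro sum.neutral) auto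
  ultimately show ?thesis by simp
qed

lemma Hsub_Hn: "g \<in> Hsub n l \<Longrightarrow> g \<in> Hn n"
  unfolding Hsub_def Hn_def Stab_def by auto

lemma hmul_ucol:
  assumes G: "G \<in> cols n l" and g: "g \<in> Hsub n l"
  shows "hmul n t (hT (ucol n G)) g x = g (inv (ucol n G) \<circ> x)"
proof -
  define u where "u = ucol n G"
  have uS: "u \<in> Sn n" unfolding u_def using ucol_Sn[OF G] .
  have up: "u permutes {1..n}" unfolding u_def using ucol_permutes[OF G] .
  have gH: "g \<in> Hn n" using Hsub_Hn[OF g] .
  have gz: "\<And>y. y \<notin> Stab n l \<Longrightarrow> g y = 0" using g unfolding Hsub_def by auto
  have "hmul n t (hT u) g x = hop n t u g x" using hmul_hT[OF uS, where t=t] by simp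
  also have "\<dots> = (\<Sum>y\<in>Sn n. g y * hop n t u (hT y) x)" using linopD[OF hop_props(1)[OF uS] gH] .
  also have "\<dots> = (\<Sum>y\<in>Sn n. g y * hT (u \<circ> y) x)"
  proof (rule sum.cong[OF refl])
    fix y assume y: "y \<in> Sn n"
    show "g y * hop n t u (hT y) x = g y * hT (u \<circ> y) x"
    proof (cases "y \<in> Stab n l")
      case True
      have pa: "plen n (u \<circ> y) = plen n u + plen n y" unfolding u_def by (rule plen_ucol_Stab[OF G True])
      then show ?thesis using hop_hT_add[OF uS y pa, where t=t] by simp
    next
      case False then show ?thesis using gz by simp
    qed
  qed
  also have "\<dots> = (\<Sum>y\<in>Sn n. if y = inv u \<circ> x then g y else 0)"
  proof (rule sum.cong[OF refl])
    fix y
    have "u \<circ> y = x \<longleftrightarrow> y = inv u \<circ> x"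
    proof
      assume "u \<circ> y = x"
      then show "y = inv u \<circ> x" using permutes_inverses(2)[OF up] by (metis comp_apply ext)
    next
      assume "y = inv u \<circ> x"
      then show "u \<circ> y = x" using permutes_inverses(1)[OF up] by (auto simp: fun_eq_iff)
    qed
    then show "g y * hT (u \<circ> y) x = (if y = inv u \<circ> x then g y else 0)" unfolding hT_apply by auto
  qed
  also have "\<dots> = g (inv u \<circ> x)" using HnD[OF gH] by (simp add: sum.delta')
  finally show ?thesis unfolding u_def .
qed

definition dec :: "nat \<Rightarrow> nat \<Rightarrow> 'a::comm_ring_1 hecke \<Rightarrow> nat list \<Rightarrow> 'a hecke" where
  "dec n l X G = (\<lambda>v. if v \<in> Stab n l then X (ucol n G \<circ> v) else 0)"

lemma dec_Hsub: "dec n l X G \<in> Hsub n l"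
  unfolding dec_def Hsub_def by simp

lemma key_sum:
  assumes "\<forall>F\<in>cols n l. f F \<in> Hsub n l"
  shows "(\<Sum>F\<in>cols n l. hmul n t (hT (ucol n F)) (f F) x) = (\<Sum>F\<in>cols n l. f F (inv (ucol n F) \<circ> x))"
  by (rule sum.cong[OF refl]) (simp add: hmul_ucol assms)

lemma hdec_eq:
  assumes X: "X \<in> Hn n" and l: "l \<le> n"
  shows "hdec n t l X = (\<lambda>F. if F \<in> cols n l then dec n l X F else (\<lambda>_. 0))"
  unfolding hdec_def
proof (rule the_equality)
  let ?f = "\<lambda>F. if F \<in> cols n l then dec n l X F else (\<lambda>_. 0)"
  show "(\<forall>F. F \<notin> cols n l \<longrightarrow> ?f F = (\<lambda>_. 0)) \<and> (\<forall>F\<in>cols n l. ?f F \<in> Hsub n l) \<and>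
      (\<forall>x. X x = (\<Sum>F\<in>cols n l. hmul n t (hT (ucol n F)) (?f F) x))"
  proof (intro conjI allI impI ballI)
    fix F assume "F \<notin> cols n l" then show "?f F = (\<lambda>_. 0)" by simp
  next
    fix F assume "F \<in> cols n l" then show "?f F \<in> Hsub n l" using dec_Hsub by simp
  next
    fix x
    have "(\<Sum>F\<in>cols n l. hmul n t (hT (ucol n F)) (?f F) x) = (\<Sum>F\<in>cols n l. ?f F (inv (ucol n F) \<circ> x))"
      by (rule key_sum) (simp add: dec_Hsub)
    also have "\<dots> = X x"
    proof (cases "x \<in> Sn n")
      case True
      have c: "colof l x \<in> cols n l" using colof_facts(1)[OF True l] .
      have "(\<Sum>F\<in>cols n l. ?f F (inv (ucol n F) \<circ> x)) = ?f (colof l x) (inv (ucol n (colof l x)) \<circ> x)"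
      proof (rule sum_single[OF finite_cols c])
        fix F assume F: "F \<in> cols n l" "F \<noteq> colof l x"
        then have "inv (ucol n F) \<circ> x \<notin> Stab n l" using inv_Stab_iff[OF F(1) True] by simp
        then show "?f F (inv (ucol n F) \<circ> x) = 0" using F unfolding dec_def by simp
      qed
      also have "\<dots> = X x"
      proof -
        have up: "ucol n (colof l x) permutes {1..n}" using ucol_permutes[OF c] .
        have "ucol n (colof l x) \<circ> (inv (ucol n (colof l x)) \<circ> x) = x"
          using permutes_inverses(1)[OF up] by (simp add: o_def)
        then show ?thesis using c colof_facts(2)[OF True l] unfolding dec_def by simp
      qed
      finally show ?thesis .
    next
      case False
      have "\<And>F. F \<in> cols n l \<Longrightarrow> inv (ucol n F) \<circ> x \<notin> Stab n l"
      proof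
        fix F assume F: "F \<in> cols n l" and "inv (ucol n F) \<circ> x \<in> Stab n l"
        then have "ucol n F \<circ> (inv (ucol n F) \<circ> x) \<in> Sn n"
          using Sn_comp[OF ucol_Sn[OF F] Stab_Sn] by blast
        moreover have "ucol n F \<circ> (inv (ucol n F) \<circ> x) = x"
          using permutes_inverses(1)[OF ucol_permutes[OF F]] by (simp add: o_def)
        ultimately show False using False by simp
      qed
      then have "(\<Sum>F\<in>cols n l. ?f F (inv (ucol n F) \<circ> x)) = 0"
        by (intro sum.neutral) (simp add: dec_def)
      then show ?thesis using HnD[OF X False] by simp
    qed
    finally show "X x = (\<Sum>F\<in>cols n l. hmul n t (hT (ucol n F)) (?f F) x)" by simp
  qed
next
  fix f assume P: "(\<forall>F. F \<notin> cols n l \<longrightarrow> f F = (\<lambda>_. 0)) \<and> (\<forall>F\<in>cols n l. f F \<in> Hsub n l) \<and>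
      (\<forall>x. X x = (\<Sum>F\<in>cols n l. hmul n t (hT (ucol n F)) (f F) x))"
  have sub: "\<forall>F\<in>cols n l. f F \<in> Hsub n l" using P by blast
  have eq: "\<And>x. X x = (\<Sum>F\<in>cols n l. f F (inv (ucol n F) \<circ> x))"
  proof -
    fix x
    have "X x = (\<Sum>F\<in>cols n l. hmul n t (hT (ucol n F)) (f F) x)" using P by blast
    also have "\<dots> = (\<Sum>F\<in>cols n l. f F (inv (ucol n F) \<circ> x))" using key_sum[OF sub] .
    finally show "X x = (\<Sum>F\<in>cols n l. f F (inv (ucol n F) \<circ> x))" .
  qed
  show "f = (\<lambda>F. if F \<in> cols n l then dec n l X F else (\<lambda>_. 0))"
  proof (rule ext)
    fix F
    show "f F = (if F \<in> cols n l then dec n l X F else (\<lambda>_. 0))"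
    proof (cases "F \<in> cols n l")
      case False then show ?thesis using P by simp
    next
      case True
      have fz: "\<And>F' y. F' \<in> cols n l \<Longrightarrow> y \<notin> Stab n l \<Longrightarrow> f F' y = 0"
        using sub unfolding Hsub_def by blast
      show ?thesis
      proof (rule ext)
        fix v
        show "f F v = (if F \<in> cols n l then dec n l X F else (\<lambda>_. 0)) v"
        proof (cases "v \<in> Stab n l")
          case False then show ?thesis using fz[OF True False] True unfolding dec_def by simp
        next
          case vS: True
          define x where "x = ucol n F \<circ> v"
          have xS: "x \<in> Sn n" unfolding x_def using Sn_comp[OF ucol_Sn[OF True] Stab_Sn[OF vS]] .
          have cx: "colof l x = F" unfolding x_def by (rule colof_unique[OF True vS])
          have iv: "inv (ucol n F) \<circ> x = v"
            unfolding x_def using permutes_inverses(2)[OF ucol_permutes[OF True]] by (simp add: o_def)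
          have "X x = (\<Sum>F'\<in>cols n l. f F' (inv (ucol n F') \<circ> x))" by (rule eq)
          also have "\<dots> = f F (inv (ucol n F) \<circ> x)"
          proof (rule sum_single[OF finite_cols True])
            fix F' assume F': "F' \<in> cols n l" "F' \<noteq> F"
            then have "inv (ucol n F') \<circ> x \<notin> Stab n l" using inv_Stab_iff[OF F'(1) xS] cx by simp
            then show "f F' (inv (ucol n F') \<circ> x) = 0" using fz[OF F'(1)] by simp
          qed
          finally show ?thesis using iv True vS unfolding dec_def x_def by simp
        qed
      qed
    qed
  qed
qed



definition Phi :: "nat \<Rightarrow> 'a::comm_ring_1 \<Rightarrow> nat \<Rightarrow> 'a hecke \<Rightarrow> nat list \<Rightarrow> 'a hecke" where
  "Phi n t l X F = hmul n t (theta n t (ucol n F)) (dec n l X F)"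

lemma ucol_scol:
  assumes G: "G \<in> cols n l" and j: "1 \<le> j" "j < n" and ex: "(j \<in> set G) \<noteq> (Suc j \<in> set G)"
  shows "ucol n (scol j G) = sref j \<circ> ucol n G"
proof (cases "j \<in> set G")
  case True then show ?thesis using ucol_swap(1)[OF G j] ex by simp
next
  case False
  then have "ucol n G = sref j \<circ> ucol n (scol j G)" using ucol_swap2(1)[OF G j] ex by simp
  then show ?thesis by (simp add: o_assoc)
qed

lemma nth_scol:
  assumes G: "G \<in> cols n l" and j: "1 \<le> j" "j < n" and ex: "(j \<in> set G) \<noteq> (Suc j \<in> set G)"
    and r: "r < l"
  shows "scol j G ! r = sref j (G ! r)"
proof -
  have G': "scol j G \<in> cols n l" using scol_facts(1)[OF G j] .
  have "ucol n (scol j G) (Suc r) = sref j (ucol n G (Suc r))" using ucol_scol[OF G j ex] by simp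
  then show ?thesis using ucol_lo[OF G, of "Suc r"] ucol_lo[OF G', of "Suc r"] r by simp
qed

lemma not_cle_1:
  assumes G: "G \<in> cols n l" and j: "1 \<le> j" "j < n" and a: "j \<in> set G" "Suc j \<notin> set G"
  shows "\<not> cle (scol j G) G"
proof
  assume c: "cle (scol j G) G"
  obtain r where r: "r < length G" "G ! r = j" using a(1) by (auto simp: in_set_conv_nth)
  have "scol j G ! r = Suc j" using nth_scol[OF G j _ ] a r cols_facts(3)[OF G] by (simp add: sref_def)
  then show False using c r unfolding cle_def by auto
qed

lemma not_cle_2:
  assumes G: "G \<in> cols n l" and j: "1 \<le> j" "j < n" and a: "j \<notin> set G" "Suc j \<in> set G"
  shows "\<not> cle G (scol j G)"
proof
  assume c: "cle G (scol j G)"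
  obtain r where r: "r < length G" "G ! r = Suc j" using a(2) by (auto simp: in_set_conv_nth)
  have "scol j G ! r = j" using nth_scol[OF G j _ ] a r cols_facts(3)[OF G] by (simp add: sref_def)
  then show False using c r unfolding cle_def by auto
qed

lemma scol_fix_iff:
  assumes G: "G \<in> cols n l" and j: "1 \<le> j" "j < n" and e: "scol j G = G"
  shows "j \<in> set G \<longleftrightarrow> Suc j \<in> set G"
proof -
  have s: "sref j ` set G = set G" using scol_facts(2)[OF G j] e by simp
  have "j \<in> set G \<Longrightarrow> Suc j \<in> set G" using s by (metis image_eqI sref_def transpose_apply_first)
  moreover have "Suc j \<in> set G \<Longrightarrow> j \<in> set G" using s by (metis image_eqI sref_def transpose_apply_second)
  ultimately show ?thesis by blast
qed

lemma dec_lin: "dec n l (\<lambda>x. a * X x + c * Y x) F = (\<lambda>v. a * dec n l X F v + c * dec n l Y F v)"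
  unfolding dec_def by auto

lemma dec_smult: "dec n l (\<lambda>x. a * X x) F = (\<lambda>v. a * dec n l X F v)"
  unfolding dec_def by auto

lemma dec_Lop_1:
  assumes G: "G \<in> cols n l" and j: "1 \<le> j" "j < n" and a: "j \<in> set G" "Suc j \<notin> set G"
  shows "dec n l (Lop t j X) G = (\<lambda>v. t * dec n l X (scol j G) v)"
proof
  fix v show "dec n l (Lop t j X) G v = t * dec n l X (scol j G) v"
  proof (cases "v \<in> Stab n l")
    case False then show ?thesis unfolding dec_def by simp
  next
    case True
    have nd: "\<not> Dl j (ucol n G \<circ> v)" using Dl_ucol_Stab[OF G True j] a by simp
    have e: "sref j \<circ> (ucol n G \<circ> v) = ucol n (scol j G) \<circ> v" using ucol_swap(1)[OF G j a] by (simp add: o_assoc)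
    show ?thesis unfolding dec_def Lop_def using True nd e by simp
  qed
qed

lemma dec_Lop_2:
  assumes G: "G \<in> cols n l" and j: "1 \<le> j" "j < n" and a: "j \<notin> set G" "Suc j \<in> set G"
  shows "dec n l (Lop t j X) G = (\<lambda>v. dec n l X (scol j G) v + (t - 1) * dec n l X G v)"
proof
  fix v show "dec n l (Lop t j X) G v = dec n l X (scol j G) v + (t - 1) * dec n l X G v"
  proof (cases "v \<in> Stab n l")
    case False then show ?thesis unfolding dec_def by simp
  next
    case True
    have d: "Dl j (ucol n G \<circ> v)" using Dl_ucol_Stab[OF G True j] a by simp
    have e: "sref j \<circ> (ucol n G \<circ> v) = ucol n (scol j G) \<circ> v"
      using ucol_scol[OF G j] a by (simp add: o_assoc)
    show ?thesis unfolding dec_def Lop_def using True d e by simp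
  qed
qed

lemma dec_Lop_3:
  assumes G: "G \<in> cols n l" and j: "1 \<le> j" "j < n" and k: "1 \<le> k" "k < n" "k \<noteq> l"
    and sc: "sref j \<circ> ucol n G = ucol n G \<circ> sref k"
    and ik: "inv (ucol n G) j = k" "inv (ucol n G) (Suc j) = Suc k"
  shows "dec n l (Lop t j X) G = Lop t k (dec n l X G)"
proof
  fix v
  have sk: "sref k \<in> Stab n l" using sref_Stab[OF k] .
  show "dec n l (Lop t j X) G v = Lop t k (dec n l X G) v"
  proof (cases "v \<in> Stab n l")
    case False
    have "sref k \<circ> v \<notin> Stab n l"
    proof
      assume "sref k \<circ> v \<in> Stab n l"
      then have "sref k \<circ> (sref k \<circ> v) \<in> Stab n l" using Stab_comp[OF sk] by blast
      then show False using False by (simp add: o_assoc)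
    qed
    then show ?thesis using False unfolding dec_def Lop_def by simp
  next
    case True
    have skv: "sref k \<circ> v \<in> Stab n l" using Stab_comp[OF sk True] .
    have up: "ucol n G permutes {1..n}" using ucol_permutes[OF G] .
    have vp: "v permutes {1..n}" using Stab_Sn[OF True] by (simp add: Sn_iff)
    have ei: "inv (ucol n G \<circ> v) = inv v \<circ> inv (ucol n G)"
      using o_inv_distrib permutes_bij[OF up] permutes_bij[OF vp] by blast
    have dd: "Dl j (ucol n G \<circ> v) \<longleftrightarrow> Dl k v" unfolding Dl_def ei using ik by simp
    have e: "sref j \<circ> (ucol n G \<circ> v) = ucol n G \<circ> (sref k \<circ> v)" using sc by (simp add: o_assoc)
    show ?thesis unfolding dec_def Lop_def using True skv dd e by simp
  qed
qed

lemma Lop_Hsub_Hn: "g \<in> Hsub n l \<Longrightarrow> 1 \<le> k \<Longrightarrow> k < n \<Longrightarrow> Lop t k g \<in> Hn n"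
  using Lop_Hn Hsub_Hn by blast

lemma dec_Hn: "dec n l X F \<in> Hn n"
  using Hsub_Hn[OF dec_Hsub] .

lemma Lop_hmul:
  assumes j: "1 \<le> j" "j < n" and Z: "Z \<in> Hn n"
  shows "hmul n t (hT (sref j)) Z = Lop t j Z"
  using hmul_hT[OF sref_Sn[OF j], where t=t] hop_sref[OF j Z, where t=t] by simp

lemma theta_comm:
  assumes u: "u \<in> Sn n" and j: "1 \<le> j" "j < n" and k: "1 \<le> k" "k < n"
    and sc: "sref j \<circ> u = u \<circ> sref k" and ndl: "\<not> Dl j u" and ndr: "\<not> Dr k u" and ti: "t * ti = 1"
  shows "hmul n t (hT (sref j)) (theta n t u) = hmul n t (theta n t u) (hT (sref k))"
proof -
  have th: "theta n t u \<in> Hn n" using theta_Hn[OF u ti] .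
  have "hmul n t (Tt t j) (theta n t u) = hmul n t (theta n t u) (Tt t k)"
    using theta_left[OF u j ndl ti] theta_right[OF u k ndr ti] sc by simp
  moreover have "hmul n t (Tt t j) (theta n t u) =
      (\<lambda>x. 1 * hmul n t (hT (sref j)) (theta n t u) x + (1 - t) * hmul n t (hT id) (theta n t u) x)"
    unfolding Tt_def by (rule hmul_lin_left)
  moreover have "hmul n t (theta n t u) (Tt t k) =
      (\<lambda>x. 1 * hmul n t (theta n t u) (hT (sref k)) x + (1 - t) * hmul n t (theta n t u) (hT id) x)"
    unfolding Tt_def by (rule linop_lin[OF hmul_linop hT_Hn[OF sref_Sn[OF k]] hT_Hn[OF id_Sn]])
  moreover have "hmul n t (hT id) (theta n t u) = theta n t u"
    using hmul_hone_left[OF th] unfolding hone_def .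
  moreover have "hmul n t (theta n t u) (hT id) = theta n t u" using hmul_hT_id[OF th] .
  ultimately show ?thesis by (auto simp: fun_eq_iff)
qed

lemma TjTt:
  assumes j: "1 \<le> j" "j < n"
  shows "hmul n t (hT (sref j)) (Tt t j) = (\<lambda>x. t * hone x)"
proof -
  have "hmul n t (hT (sref j)) (Tt t j) =
     (\<lambda>x. 1 * hmul n t (hT (sref j)) (hT (sref j)) x + (1 - t) * hmul n t (hT (sref j)) (hT id) x)"
    unfolding Tt_def by (rule linop_lin[OF hmul_linop hT_Hn[OF sref_Sn[OF j]] hT_Hn[OF id_Sn]])
  also have "\<dots> = (\<lambda>x. t * hone x)"
    unfolding TT[OF j] hmul_hT_id[OF hT_Hn[OF sref_Sn[OF j]]] hone_def
    by (rule ext) (simp add: algebra_simps)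
  finally show ?thesis .
qed



lemma Phi_Hn: "F \<in> cols n l \<Longrightarrow> Phi n t l X F \<in> Hn n"
  unfolding Phi_def by (rule hmul_Hn[OF dec_Hn])

lemma Lop_Phi_fixed:
  assumes F: "F \<in> cols n l" and j: "1 \<le> j" "j < n" and f: "j \<in> set F \<longleftrightarrow> Suc j \<in> set F"
    and ti: "t * ti = 1"
  shows "Lop t j (Phi n t l X F) = hmul n t (theta n t (ucol n F)) (dec n l (Lop t j X) F)"
proof -
  obtain k where k: "1 \<le> k" "k < n" "k \<noteq> l" "sref j \<circ> ucol n F = ucol n F \<circ> sref k"
    "\<not> Dl j (ucol n F)" "\<not> Dr k (ucol n F)" "inv (ucol n F) j = k" "inv (ucol n F) (Suc j) = Suc k"
    using ucol_fixed[OF F j f] by metis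
  define th where "th = theta n t (ucol n F)"
  have uS: "ucol n F \<in> Sn n" using ucol_Sn[OF F] .
  have th: "th \<in> Hn n" unfolding th_def using theta_Hn[OF uS ti] .
  have D: "dec n l X F \<in> Hn n" using dec_Hn .
  have "Lop t j (Phi n t l X F) = hmul n t (hT (sref j)) (hmul n t th (dec n l X F))"
    unfolding Phi_def th_def using Lop_hmul[OF j hmul_Hn[OF D]] by simp
  also have "\<dots> = hmul n t (hmul n t (hT (sref j)) th) (dec n l X F)"
    by (rule hmul_assoc[OF hT_Hn[OF sref_Sn[OF j]] th D])
  also have "\<dots> = hmul n t (hmul n t th (hT (sref k))) (dec n l X F)"
    unfolding th_def using theta_comm[OF uS j k(1,2) k(4,5,6) ti] by simp
  also have "\<dots> = hmul n t th (hmul n t (hT (sref k)) (dec n l X F))"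
    by (rule hmul_assoc[OF th hT_Hn[OF sref_Sn[OF k(1,2)]] D, symmetric])
  also have "\<dots> = hmul n t th (Lop t k (dec n l X F))" using Lop_hmul[OF k(1,2) D] by simp
  also have "\<dots> = hmul n t th (dec n l (Lop t j X) F)"
    using dec_Lop_3[OF F j k(1,2,3) k(4) k(7,8), where t=t and X=X] by simp
  finally show ?thesis unfolding th_def .
qed

lemma Lop_Phi_up:
  assumes F: "F \<in> cols n l" and j: "1 \<le> j" "j < n" and a: "j \<in> set F" "Suc j \<notin> set F"
    and ti: "t * ti = 1" and D: "D \<in> Hn n"
  shows "Lop t j (hmul n t (theta n t (ucol n (scol j F))) D) = (\<lambda>x. t * hmul n t (theta n t (ucol n F)) D x)"
proof -
  have uS: "ucol n F \<in> Sn n" using ucol_Sn[OF F] .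
  define th where "th = theta n t (ucol n F)"
  have th: "th \<in> Hn n" unfolding th_def using theta_Hn[OF uS ti] .
  have Tt: "Tt t j \<in> Hn n" using Tt_Hn[OF j] .
  have e: "theta n t (ucol n (scol j F)) = hmul n t (Tt t j) th"
    unfolding th_def using ucol_swap[OF F j a] theta_left[OF uS j _ ti] by simp
  have "Lop t j (hmul n t (theta n t (ucol n (scol j F))) D) = hmul n t (hT (sref j)) (hmul n t (hmul n t (Tt t j) th) D)"
    unfolding e using Lop_hmul[OF j hmul_Hn[OF D]] by simp
  also have "\<dots> = hmul n t (hmul n t (hT (sref j)) (hmul n t (Tt t j) th)) D"
    by (rule hmul_assoc[OF hT_Hn[OF sref_Sn[OF j]] hmul_Hn[OF th] D])
  also have "\<dots> = hmul n t (hmul n t (hmul n t (hT (sref j)) (Tt t j)) th) D"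
    using hmul_assoc[OF hT_Hn[OF sref_Sn[OF j]] Tt th] by simp
  also have "\<dots> = hmul n t (hmul n t (\<lambda>x. t * hone x) th) D" unfolding TjTt[OF j] ..
  also have "\<dots> = hmul n t (\<lambda>x. t * th x) D"
    unfolding hmul_smult_left hmul_hone_left[OF th] ..
  also have "\<dots> = (\<lambda>x. t * hmul n t th D x)" by (rule hmul_smult_left)
  finally show ?thesis unfolding th_def .
qed

lemma theta_down:
  assumes F: "F \<in> cols n l" and j: "1 \<le> j" "j < n" and a: "j \<notin> set F" "Suc j \<in> set F"
    and ti: "t * ti = 1" and D: "D \<in> Hn n"
  shows "hmul n t (theta n t (ucol n F)) D =
    (\<lambda>x. Lop t j (hmul n t (theta n t (ucol n (scol j F))) D) x + (1 - t) * hmul n t (theta n t (ucol n (scol j F))) D x)"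
proof -
  note sw = ucol_swap2[OF F j a]
  have G': "scol j F \<in> cols n l" using scol_facts(1)[OF F j] .
  have uS: "ucol n (scol j F) \<in> Sn n" using ucol_Sn[OF G'] .
  define th where "th = theta n t (ucol n (scol j F))"
  have th: "th \<in> Hn n" unfolding th_def using theta_Hn[OF uS ti] .
  have e: "theta n t (ucol n F) = hmul n t (Tt t j) th"
    unfolding th_def using sw theta_left[OF uS j sw(2) ti] by simp
  have "hmul n t (theta n t (ucol n F)) D = hmul n t (Tt t j) (hmul n t th D)"
    unfolding e by (rule hmul_assoc[OF Tt_Hn[OF j] th D, symmetric])
  also have "\<dots> = (\<lambda>x. Lop t j (hmul n t th D) x + (1 - t) * hmul n t th D x)"
    by (rule Tt_mul[OF j hmul_Hn[OF D]])
  finally show ?thesis unfolding th_def .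
qed

lemma cancel_t: "t * ti = 1 \<Longrightarrow> (t::'a::comm_ring_1) * a = t * b \<Longrightarrow> a = b"
  by (metis mult.assoc mult.commute mult_1)

lemma L_lemma:
  assumes F: "F \<in> cols n l" and j: "1 \<le> j" "j < n" and ti: "t * ti = 1"
    and H: "X = (\<lambda>x. Lop t j Y x + (1 - t) * Y x) \<or> (X = Y \<and> Lop t j X = (\<lambda>x. t * X x))"
  shows "cle (scol j F) F \<Longrightarrow> Phi n t l X F =
           (\<lambda>x. Lop t j (Phi n t l Y (scol j F)) x + (1 - t) * Phi n t l Y (scol j F) x)"
    and "cle F (scol j F) \<Longrightarrow> Phi n t l X F =
           (\<lambda>x. Lop t j (Phi n t l Y (scol j F)) x + (1 - t) * Phi n t l Y F x)"
proof -
  have uS: "ucol n F \<in> Sn n" using ucol_Sn[OF F] .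
  define th where "th = theta n t (ucol n F)"
  have th: "th \<in> Hn n" unfolding th_def using theta_Hn[OF uS ti] .
  have fixed: "j \<in> set F \<longleftrightarrow> Suc j \<in> set F \<Longrightarrow> Phi n t l X F =
           (\<lambda>x. Lop t j (Phi n t l Y F) x + (1 - t) * Phi n t l Y F x)"
  proof -
    assume f: "j \<in> set F \<longleftrightarrow> Suc j \<in> set F"
    have "(\<lambda>x. Lop t j (Phi n t l Y F) x + (1 - t) * Phi n t l Y F x)
        = (\<lambda>x. 1 * hmul n t th (dec n l (Lop t j Y) F) x + (1 - t) * hmul n t th (dec n l Y F) x)"
      unfolding Lop_Phi_fixed[OF F j f ti] by (simp add: Phi_def th_def)
    also have "\<dots> = hmul n t th (\<lambda>v. 1 * dec n l (Lop t j Y) F v + (1 - t) * dec n l Y F v)"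
      by (rule linop_lin[OF hmul_linop dec_Hn dec_Hn, symmetric])
    also have "\<dots> = hmul n t th (dec n l X F)"
    proof -
      have "(\<lambda>v. 1 * dec n l (Lop t j Y) F v + (1 - t) * dec n l Y F v) = dec n l X F"
      proof (cases "X = (\<lambda>x. Lop t j Y x + (1 - t) * Y x)")
        case True
        then show ?thesis using dec_lin[of n l 1 "Lop t j Y" "1 - t" Y F] by simp
      next
        case False
        then have XY: "X = Y" "Lop t j X = (\<lambda>x. t * X x)" using H by auto
        have "dec n l (Lop t j Y) F = (\<lambda>v. t * dec n l Y F v)" using XY dec_smult[of n l t Y F] by simp
        then show ?thesis unfolding XY(1) by (simp add: algebra_simps)
      qed
      then show ?thesis by simp
    qed
    finally show ?thesis unfolding Phi_def th_def by simp
  qed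
  show "cle (scol j F) F \<Longrightarrow> Phi n t l X F =
           (\<lambda>x. Lop t j (Phi n t l Y (scol j F)) x + (1 - t) * Phi n t l Y (scol j F) x)"
  proof -
    assume c: "cle (scol j F) F"
    show ?thesis
    proof (cases "j \<in> set F \<longleftrightarrow> Suc j \<in> set F")
      case True
      then show ?thesis using fixed scol_fix[OF F j True] by simp
    next
      case False
      have a: "j \<notin> set F" "Suc j \<in> set F" using False not_cle_1[OF F j] c by auto
      have dd: "dec n l X F = dec n l Y (scol j F)"
      proof (cases "X = (\<lambda>x. Lop t j Y x + (1 - t) * Y x)")
        case True
        show ?thesis unfolding True dec_lin[of n l 1 "Lop t j Y" "1 - t" Y F, simplified] dec_Lop_2[OF F j a]
          by (auto simp: fun_eq_iff algebra_simps)
      next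
        case False
        then have XY: "X = Y" "Lop t j X = (\<lambda>x. t * X x)" using H by auto
        have "dec n l (Lop t j X) F = dec n l (\<lambda>x. t * X x) F" using XY by simp
        then have "(\<lambda>v. dec n l X (scol j F) v + (t - 1) * dec n l X F v) = (\<lambda>v. t * dec n l X F v)"
          unfolding dec_Lop_2[OF F j a] dec_smult .
        then have "dec n l X (scol j F) = dec n l X F" by (auto simp: fun_eq_iff algebra_simps)
        then show ?thesis using XY by simp
      qed
      show ?thesis unfolding Phi_def dd by (rule theta_down[OF F j a ti dec_Hn])
    qed
  qed
  show "cle F (scol j F) \<Longrightarrow> Phi n t l X F =
           (\<lambda>x. Lop t j (Phi n t l Y (scol j F)) x + (1 - t) * Phi n t l Y F x)"
  proof -
    assume c: "cle F (scol j F)"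
    show ?thesis
    proof (cases "j \<in> set F \<longleftrightarrow> Suc j \<in> set F")
      case True
      then show ?thesis using fixed scol_fix[OF F j True] by simp
    next
      case False
      have a: "j \<in> set F" "Suc j \<notin> set F" using False not_cle_2[OF F j] c by auto
      have up: "Lop t j (Phi n t l Y (scol j F)) = (\<lambda>x. t * hmul n t th (dec n l Y (scol j F)) x)"
        unfolding Phi_def th_def by (rule Lop_Phi_up[OF F j a ti dec_Hn])
      have "(\<lambda>x. Lop t j (Phi n t l Y (scol j F)) x + (1 - t) * Phi n t l Y F x)
          = (\<lambda>x. t * hmul n t th (dec n l Y (scol j F)) x + (1 - t) * hmul n t th (dec n l Y F) x)"
        unfolding up by (simp add: Phi_def th_def)
      also have "\<dots> = hmul n t th (\<lambda>v. t * dec n l Y (scol j F) v + (1 - t) * dec n l Y F v)"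
        by (rule linop_lin[OF hmul_linop dec_Hn dec_Hn, symmetric])
      also have "\<dots> = hmul n t th (dec n l X F)"
      proof -
        have "(\<lambda>v. t * dec n l Y (scol j F) v + (1 - t) * dec n l Y F v) = dec n l X F"
        proof (cases "X = (\<lambda>x. Lop t j Y x + (1 - t) * Y x)")
          case True
          show ?thesis unfolding True dec_lin[of n l 1 "Lop t j Y" "1 - t" Y F, simplified] dec_Lop_1[OF F j a]
            by simp
        next
          case False
          then have XY: "X = Y" "Lop t j X = (\<lambda>x. t * X x)" using H by auto
          have "dec n l (Lop t j X) F = dec n l (\<lambda>x. t * X x) F" using XY by simp
          then have "(\<lambda>v. t * dec n l X (scol j F) v) = (\<lambda>v. t * dec n l X F v)"
            unfolding dec_Lop_1[OF F j a] dec_smult .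
          then have "dec n l X (scol j F) = dec n l X F"
            using cancel_t[OF ti] by (auto simp: fun_eq_iff)
          then show ?thesis unfolding XY(1) by (simp add: algebra_simps)
        qed
        then show ?thesis by simp
      qed
      finally show ?thesis unfolding Phi_def th_def by simp
    qed
  qed
qed

lemma C_lemma:
  assumes F: "F \<in> cols n l" and j: "1 \<le> j" "j < n" and ti: "t * ti = 1"
    and e: "scol j F = F" and X: "Lop t j X = (\<lambda>x. t * X x)"
  shows "Lop t j (Phi n t l X F) = (\<lambda>x. t * Phi n t l X F x)"
proof -
  have f: "j \<in> set F \<longleftrightarrow> Suc j \<in> set F" using scol_fix_iff[OF F j e] .
  have "Lop t j (Phi n t l X F) = hmul n t (theta n t (ucol n F)) (dec n l (\<lambda>x. t * X x) F)"
    unfolding Lop_Phi_fixed[OF F j f ti] X ..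
  also have "\<dots> = hmul n t (theta n t (ucol n F)) (\<lambda>v. t * dec n l X F v)" unfolding dec_smult ..
  also have "\<dots> = (\<lambda>x. t * Phi n t l X F x)" unfolding Phi_def by (rule linop_smult[OF hmul_linop dec_Hn])
  finally show ?thesis .
qed



definition okcols :: "nat \<Rightarrow> nat list list \<Rightarrow> bool" where
  "okcols n S \<longleftrightarrow> (\<forall>C\<in>set S. C \<in> cols n (length C))"

lemma one_l_Hn: "one_l n l \<in> Hn n"
  unfolding one_l_def Hn_def Stab_def by auto

lemma Psi_single: "Psi n t [C] = hmul n t (theta n t (ucol n C)) (one_l n (length C))"
  by (simp add: theta_def hmul_smult_left)

lemma Psi_Hn: "okcols n S \<Longrightarrow> Psi n t S \<in> Hn n"
proof (induction n t S rule: Psi.induct)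
  case (1 n t) then show ?case by (simp add: Hn_def)
next
  case (2 n t C) show ?case unfolding Psi_single by (rule hmul_Hn[OF one_l_Hn])
next
  case (3 n t C D S)
  have C: "C \<in> cols n (length C)" and DS: "okcols n (D # S)" using "3.prems" unfolding okcols_def by auto
  have IH: "Psi n t (D # S) \<in> Hn n" using "3.IH" DS by simp
  have "hdec n t (length C) (Psi n t (D # S)) C = dec n (length C) (Psi n t (D # S)) C"
    using hdec_eq[OF IH cols_facts(5)[OF C]] C by simp
  then show ?case using smult_Hn[OF hmul_Hn[OF dec_Hn]] by simp
qed

lemma Psi_cons:
  assumes C: "C \<in> cols n (length C)" and ok: "okcols n (D # S)"
  shows "Psi n t (C # D # S) = Phi n t (length C) (Psi n t (D # S)) C"
proof -
  have IH: "Psi n t (D # S) \<in> Hn n" using Psi_Hn[OF ok] .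
  have "hdec n t (length C) (Psi n t (D # S)) C = dec n (length C) (Psi n t (D # S)) C"
    using hdec_eq[OF IH cols_facts(5)[OF C]] C by simp
  then show ?thesis unfolding Phi_def by (simp add: theta_def hmul_smult_left)
qed

lemma Lop_one_l:
  assumes k: "1 \<le> k" "k < n" "k \<noteq> l"
  shows "Lop t k (one_l n l) = (\<lambda>x. t * one_l n l x)"
proof
  fix w
  have sk: "sref k \<in> Stab n l" using sref_Stab[OF k] .
  have "sref k \<circ> w \<in> Stab n l \<longleftrightarrow> w \<in> Stab n l"
  proof
    assume "sref k \<circ> w \<in> Stab n l"
    then have "sref k \<circ> (sref k \<circ> w) \<in> Stab n l" using Stab_comp[OF sk] by blast
    then show "w \<in> Stab n l" by (simp add: o_assoc)
  next
    assume "w \<in> Stab n l" then show "sref k \<circ> w \<in> Stab n l" using Stab_comp[OF sk] by blast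
  qed
  then show "Lop t k (one_l n l) w = t * one_l n l w" unfolding Lop_def one_l_def by (simp add: algebra_simps)
qed

lemma Lop_Psi_single_fixed:
  assumes F: "F \<in> cols n (length F)" and j: "1 \<le> j" "j < n" and e: "scol j F = F" and ti: "t * ti = 1"
  shows "Lop t j (Psi n t [F]) = (\<lambda>x. t * Psi n t [F] x)"
proof -
  define l where "l = length F"
  have F': "F \<in> cols n l" using F unfolding l_def .
  have f: "j \<in> set F \<longleftrightarrow> Suc j \<in> set F" using scol_fix_iff[OF F' j e] .
  obtain k where k: "1 \<le> k" "k < n" "k \<noteq> l" "sref j \<circ> ucol n F = ucol n F \<circ> sref k"
    "\<not> Dl j (ucol n F)" "\<not> Dr k (ucol n F)"
    using ucol_fixed[OF F' j f] by metis
  define th where "th = theta n t (ucol n F)"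
  have uS: "ucol n F \<in> Sn n" using ucol_Sn[OF F'] .
  have th: "th \<in> Hn n" unfolding th_def using theta_Hn[OF uS ti] .
  have D: "one_l n l \<in> Hn n" by (rule one_l_Hn)
  have "Lop t j (Psi n t [F]) = hmul n t (hT (sref j)) (hmul n t th (one_l n l))"
    unfolding Psi_single th_def[symmetric] l_def[symmetric] by (rule Lop_hmul[OF j hmul_Hn[OF D], symmetric])
  also have "\<dots> = hmul n t (hmul n t (hT (sref j)) th) (one_l n l)"
    by (rule hmul_assoc[OF hT_Hn[OF sref_Sn[OF j]] th D])
  also have "\<dots> = hmul n t (hmul n t th (hT (sref k))) (one_l n l)"
    unfolding th_def using theta_comm[OF uS j k(1,2) k(4,5,6) ti] by simp
  also have "\<dots> = hmul n t th (hmul n t (hT (sref k)) (one_l n l))"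
    by (rule hmul_assoc[OF th hT_Hn[OF sref_Sn[OF k(1,2)]] D, symmetric])
  also have "\<dots> = hmul n t th (\<lambda>x. t * one_l n l x)" using Lop_hmul[OF k(1,2) D, where t=t] Lop_one_l[OF k(1,2,3), where t=t] by simp
  also have "\<dots> = (\<lambda>x. t * hmul n t th (one_l n l) x)" by (rule linop_smult[OF hmul_linop D])
  finally show ?thesis unfolding Psi_single th_def l_def .
qed

definition HH :: "'a::comm_ring_1 \<Rightarrow> nat \<Rightarrow> 'a hecke \<Rightarrow> 'a hecke \<Rightarrow> bool" where
  "HH t j X Y \<longleftrightarrow> X = (\<lambda>x. Lop t j Y x + (1 - t) * Y x) \<or> (X = Y \<and> Lop t j X = (\<lambda>x. t * X x))"

lemma base_HH:
  assumes E: "E \<in> cols n a" and j: "1 \<le> j" "j < n" and ti: "t * ti = 1" and c: "cle (scol j E) E"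
  shows "HH t j (Psi n t [E]) (Psi n t [scol j E])"
proof (cases "j \<in> set E \<longleftrightarrow> Suc j \<in> set E")
  case True
  have e: "scol j E = E" using scol_fix[OF E j True] .
  have E': "E \<in> cols n (length E)" using E cols_facts(3)[OF E] by simp
  show ?thesis unfolding HH_def e using Lop_Psi_single_fixed[OF E' j e ti] by simp
next
  case False
  have a: "j \<notin> set E" "Suc j \<in> set E" using False not_cle_1[OF E j] c by auto
  have len: "length (scol j E) = length E"
    using cols_facts(3)[OF scol_facts(1)[OF E j]] cols_facts(3)[OF E] by simp
  have "Psi n t [E] = (\<lambda>x. Lop t j (Psi n t [scol j E]) x + (1 - t) * Psi n t [scol j E] x)"
    unfolding Psi_single len using theta_down[OF E j a ti one_l_Hn] by simp
  then show ?thesis unfolding HH_def by simp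
qed

lemma cle_down:
  assumes E: "E \<in> cols n a" and j: "1 \<le> j" "j < n" and a: "j \<notin> set E" "Suc j \<in> set E"
  shows "cle (scol j E) E"
  unfolding cle_def
proof (intro conjI allI impI)
  show "length (scol j E) = length E"
    using cols_facts(3)[OF scol_facts(1)[OF E j]] cols_facts(3)[OF E] by simp
  fix r assume "r < length (scol j E)"
  then have r: "r < a" using cols_facts(3)[OF scol_facts(1)[OF E j]] by simp
  have "E ! r \<noteq> j" using a(1) r cols_facts(3)[OF E] by (metis nth_mem)
  then show "scol j E ! r \<le> E ! r" using nth_scol[OF E j _ r] a by (auto simp: sref_def transpose_def)
qed

lemma step_HH:
  assumes E: "E \<in> cols n a" and j: "1 \<le> j" "j < n" and ti: "t * ti = 1"
    and a: "j \<notin> set E" "Suc j \<in> set E" and ok: "okcols n (D # S)"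
    and T: "Lop t j (Psi n t (D # S)) = (\<lambda>x. t * Psi n t (D # S) x)"
  shows "HH t j (Psi n t (E # D # S)) (Psi n t (scol j E # D # S))"
proof -
  have E': "E \<in> cols n (length E)" using E cols_facts(3)[OF E] by simp
  have G: "scol j E \<in> cols n a" using scol_facts(1)[OF E j] .
  have G': "scol j E \<in> cols n (length (scol j E))" using G cols_facts(3)[OF G] by simp
  have len: "length (scol j E) = length E" using cols_facts(3)[OF G] cols_facts(3)[OF E] by simp
  have "Phi n t (length E) (Psi n t (D # S)) E =
     (\<lambda>x. Lop t j (Phi n t (length E) (Psi n t (D # S)) (scol j E)) x +
          (1 - t) * Phi n t (length E) (Psi n t (D # S)) (scol j E) x)"
    by (rule L_lemma(1)[OF E' j ti _ cle_down[OF E j a]]) (use T in simp)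
  then show ?thesis unfolding HH_def Psi_cons[OF E' ok] Psi_cons[OF G' ok] len by simp
qed

lemma fixed_HH_list:
  assumes ok: "okcols n (D # S)" and j: "1 \<le> j" "j < n" and ti: "t * ti = 1"
    and fx: "\<forall>C\<in>set (D # S). scol j C = C"
  shows "Lop t j (Psi n t (D # S)) = (\<lambda>x. t * Psi n t (D # S) x)"
  using ok fx
proof (induction S arbitrary: D)
  case Nil
  have D: "D \<in> cols n (length D)" using Nil.prems unfolding okcols_def by simp
  show ?case using Lop_Psi_single_fixed[OF D j _ ti] Nil.prems by simp
next
  case (Cons D' S)
  have D: "D \<in> cols n (length D)" and ok': "okcols n (D' # S)" using Cons.prems unfolding okcols_def by auto
  have IH: "Lop t j (Psi n t (D' # S)) = (\<lambda>x. t * Psi n t (D' # S) x)" using Cons ok' by simp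
  show ?case unfolding Psi_cons[OF D ok'] by (rule C_lemma[OF D j ti _ IH]) (use Cons.prems in simp)
qed

lemma top:
  assumes F: "F \<in> cols n b" and j: "1 \<le> j" "j < n" and ti: "t * ti = 1"
    and ok: "okcols n (E # S)" and ok': "okcols n (scol j E # S)"
    and H: "HH t j (Psi n t (E # S)) (Psi n t (scol j E # S))"
  shows "(cle (scol j F) F \<longrightarrow>
               Psi n t (F # E # S) =
               (\<lambda>x. t * hmul n t (hinv n t (hT (sref j)))
                          (Psi n t (scol j F # scol j E # S)) x)) \<and>
            (cle F (scol j F) \<longrightarrow>
               Psi n t (F # E # S) =
               (\<lambda>x. hmul n t (hT (sref j)) (Psi n t (scol j F # scol j E # S)) x
                    + (1 - t) * Psi n t (F # scol j E # S) x))"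
proof -
  have F': "F \<in> cols n (length F)" using F cols_facts(3)[OF F] by simp
  have G: "scol j F \<in> cols n b" using scol_facts(1)[OF F j] .
  have G': "scol j F \<in> cols n (length (scol j F))" using G cols_facts(3)[OF G] by simp
  have len: "length (scol j F) = length F" using cols_facts(3)[OF G] cols_facts(3)[OF F] by simp
  note LL = L_lemma[OF F' j ti H[unfolded HH_def]]
  define Z where "Z = Psi n t (scol j F # scol j E # S)"
  have Z: "Z \<in> Hn n" unfolding Z_def using ok' G' by (intro Psi_Hn) (simp add: okcols_def)
  have e1: "Psi n t (F # E # S) = Phi n t (length F) (Psi n t (E # S)) F" by (rule Psi_cons[OF F' ok])
  have e2: "Z = Phi n t (length F) (Psi n t (scol j E # S)) (scol j F)"
    unfolding Z_def using Psi_cons[OF G' ok'] len by simp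
  have e3: "Psi n t (F # scol j E # S) = Phi n t (length F) (Psi n t (scol j E # S)) F" by (rule Psi_cons[OF F' ok'])
  have hi: "(\<lambda>x. t * hmul n t (hinv n t (hT (sref j))) Z x) = (\<lambda>x. Lop t j Z x + (1 - t) * Z x)"
  proof -
    have "(\<lambda>x. t * hmul n t (hinv n t (hT (sref j))) Z x) = hmul n t (\<lambda>x. t * Tinv t ti j x) Z"
      unfolding hinv_sref(1)[OF j ti] hmul_smult_left ..
    also have "\<dots> = hmul n t (Tt t j) Z" unfolding Tt_eq[OF ti] ..
    also have "\<dots> = (\<lambda>x. Lop t j Z x + (1 - t) * Z x)" by (rule Tt_mul[OF j Z])
    finally show ?thesis .
  qed
  have lo: "(\<lambda>x. hmul n t (hT (sref j)) Z x) = Lop t j Z" using Lop_hmul[OF j Z] by simp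
  show ?thesis
  proof (intro conjI impI)
    assume "cle (scol j F) F"
    then have "Psi n t (F # E # S) = (\<lambda>x. Lop t j Z x + (1 - t) * Z x)"
      using LL(1) unfolding e1 e2 by simp
    then show "Psi n t (F # E # S) = (\<lambda>x. t * hmul n t (hinv n t (hT (sref j))) (Psi n t (scol j F # scol j E # S)) x)"
      unfolding Z_def[symmetric] hi .
  next
    assume "cle F (scol j F)"
    then show "Psi n t (F # E # S) = (\<lambda>x. hmul n t (hT (sref j)) (Psi n t (scol j F # scol j E # S)) x
                    + (1 - t) * Psi n t (F # scol j E # S) x)"
    proof -
      have "Psi n t (F # E # S) = (\<lambda>x. Lop t j Z x + (1 - t) * Psi n t (F # scol j E # S) x)"
        using LL(2) \<open>cle F (scol j F)\<close> unfolding e1 e2 e3 by simp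
      then show ?thesis unfolding Z_def[symmetric] using Lop_hmul[OF j Z] by simp
    qed
  qed
qed



lemma upt_cols: "m \<le> n \<Longrightarrow> [1..<Suc m] \<in> cols n m"
  unfolding cols_def by (auto simp del: upt_Suc)

lemma T0_col:
  assumes "C \<in> set (T0 n mu)"
  shows "\<exists>m. C = [1..<Suc m] \<and> m \<le> card {i. i < n \<and> 1 \<le> mu ! i} \<and> m \<le> n"
proof -
  have "C \<in> (\<lambda>k. [1..<Suc (card {i. i < n \<and> k \<le> mu ! i})]) ` set [1..<Suc (Max (insert 0 (set mu)))]"
    using assms unfolding T0_def by (simp only: set_map)
  then obtain k where k: "k \<in> set [1..<Suc (Max (insert 0 (set mu)))]"
    and C: "C = [1..<Suc (card {i. i < n \<and> k \<le> mu ! i})]" by blast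
  have k1: "1 \<le> k" using k by (simp del: upt_Suc)
  have s1: "{i. i < n \<and> k \<le> mu ! i} \<subseteq> {i. i < n \<and> 1 \<le> mu ! i}" using k1 by auto
  have s2: "{i. i < n \<and> 1 \<le> mu ! i} \<subseteq> {..<n}" by auto
  have f: "finite {i. i < n \<and> 1 \<le> mu ! i}" by (rule finite_subset[OF s2]) simp
  have "card {i. i < n \<and> k \<le> mu ! i} \<le> card {i. i < n \<and> 1 \<le> mu ! i}" by (rule card_mono[OF f s1])
  moreover have "card {i. i < n \<and> 1 \<le> mu ! i} \<le> n" using card_mono[OF _ s2] by simp
  ultimately show ?thesis using C by auto
qed

lemma T0_hd:
  assumes "T0 n mu = D # S"
  shows "D = [1..<Suc (card {i. i < n \<and> 1 \<le> mu ! i})]"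
proof -
  define M where "M = Max (insert 0 (set mu))"
  have "1 < Suc M"
  proof (rule ccontr)
    assume "\<not> 1 < Suc M"
    then have "M = 0" by simp
    then show False using assms unfolding T0_def M_def[symmetric] by simp
  qed
  then have e: "[1..<Suc M] = 1 # [Suc 1..<Suc M]" by (rule upt_conv_Cons)
  show ?thesis using assms unfolding T0_def M_def[symmetric] e by (simp del: upt_Suc)
qed

lemma E_ge:
  assumes "sorted_wrt (<) E" "set E \<subseteq> {1..n}" "r < length E"
  shows "Suc r \<le> E ! r"
  using assms(3)
proof (induction r)
  case 0 then show ?case using assms(2) nth_mem[OF 0] by force
next
  case (Suc r)
  have "E ! r < E ! Suc r" using sorted_wrt_nth_less[OF assms(1), of r "Suc r"] Suc.prems by simp
  then show ?case using Suc by simp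
qed

theorem proposition6p5:
  fixes t :: "'a::comm_ring_1" and n :: nat
  assumes "t dvd 1"
  shows "(\<forall>mu a b E F j.
            dominant n mu \<and> b \<le> n \<and> a \<le> b \<and> lenpart mu \<le> a \<and>
            E \<in> cols n a \<and> F \<in> cols n b \<and> semistandard (E # T0 n mu) \<and>
            1 \<le> j \<and> j < n \<and> j \<notin> set E \<and> Suc j \<in> set E \<longrightarrow>
            (cle (scol j F) F \<longrightarrow>
               Psi n t (F # E # T0 n mu) =
               (\<lambda>x. t * hmul n t (hinv n t (hT (sref j)))
                          (Psi n t (scol j F # scol j E # T0 n mu)) x)) \<and>
            (cle F (scol j F) \<longrightarrow>
               Psi n t (F # E # T0 n mu) =
               (\<lambda>x. hmul n t (hT (sref j)) (Psi n t (scol j F # scol j E # T0 n mu)) x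
                    + (1 - t) * Psi n t (F # scol j E # T0 n mu) x)))
       \<and>
         (\<forall>a b E F j.
            1 \<le> a \<and> a \<le> b \<and> b \<le> n \<and>
            E \<in> cols n a \<and> F \<in> cols n b \<and>
            1 \<le> j \<and> j < n \<and> cle (scol j E) E \<longrightarrow>
            (cle (scol j F) F \<longrightarrow>
               Psi n t [F, E] =
               (\<lambda>x. t * hmul n t (hinv n t (hT (sref j))) (Psi n t [scol j F, scol j E]) x)) \<and>
            (cle F (scol j F) \<longrightarrow>
               Psi n t [F, E] =
               (\<lambda>x. hmul n t (hT (sref j)) (Psi n t [scol j F, scol j E]) x
                    + (1 - t) * Psi n t [F, scol j E] x)))"
proof -
  obtain ti where ti: "t * ti = 1" using assms by (metis dvd_def)
  have okE: "\<And>E a. E \<in> cols n a \<Longrightarrow> okcols n [E]"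
    unfolding okcols_def using cols_facts(3) by fastforce
  have part2: "\<And>a E F b j. E \<in> cols n a \<Longrightarrow> F \<in> cols n b \<Longrightarrow> 1 \<le> j \<Longrightarrow> j < n \<Longrightarrow> cle (scol j E) E \<Longrightarrow>
            (cle (scol j F) F \<longrightarrow>
               Psi n t [F, E] =
               (\<lambda>x. t * hmul n t (hinv n t (hT (sref j))) (Psi n t [scol j F, scol j E]) x)) \<and>
            (cle F (scol j F) \<longrightarrow>
               Psi n t [F, E] =
               (\<lambda>x. hmul n t (hT (sref j)) (Psi n t [scol j F, scol j E]) x
                    + (1 - t) * Psi n t [F, scol j E] x))"
  proof -
    fix a E F b j assume E: "E \<in> cols n a" and F: "F \<in> cols n b" and j: "1 \<le> j" "j < n"
      and c: "cle (scol j E) E"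
    have H: "HH t j (Psi n t [E]) (Psi n t [scol j E])" by (rule base_HH[OF E j ti c])
    show "?thesis a E F b j"
      using top[OF F j ti okE[OF E] okE[OF scol_facts(1)[OF E j]] H] by simp
  qed
  show ?thesis
  proof (intro conjI allI impI)
    fix a b E F j
    assume h: "1 \<le> a \<and> a \<le> b \<and> b \<le> n \<and> E \<in> cols n a \<and> F \<in> cols n b \<and>
            1 \<le> j \<and> j < n \<and> cle (scol j E) E"
    show "cle (scol j F) F \<Longrightarrow> Psi n t [F, E] =
               (\<lambda>x. t * hmul n t (hinv n t (hT (sref j))) (Psi n t [scol j F, scol j E]) x)"
      using part2[of E a F b j] h by blast
    show "cle F (scol j F) \<Longrightarrow> Psi n t [F, E] =
               (\<lambda>x. hmul n t (hT (sref j)) (Psi n t [scol j F, scol j E]) x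
                    + (1 - t) * Psi n t [F, scol j E] x)"
      using part2[of E a F b j] h by blast
  next
    fix mu a b E F j
    assume h: "dominant n mu \<and> b \<le> n \<and> a \<le> b \<and> lenpart mu \<le> a \<and>
            E \<in> cols n a \<and> F \<in> cols n b \<and> semistandard (E # T0 n mu) \<and>
            1 \<le> j \<and> j < n \<and> j \<notin> set E \<and> Suc j \<in> set E"
    then have E: "E \<in> cols n a" and F: "F \<in> cols n b" and j: "1 \<le> j" "j < n"
      and ja: "j \<notin> set E" "Suc j \<in> set E" and ss: "semistandard (E # T0 n mu)" by auto
    have goal: "(cle (scol j F) F \<longrightarrow>
               Psi n t (F # E # T0 n mu) =
               (\<lambda>x. t * hmul n t (hinv n t (hT (sref j)))
                          (Psi n t (scol j F # scol j E # T0 n mu)) x)) \<and>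
            (cle F (scol j F) \<longrightarrow>
               Psi n t (F # E # T0 n mu) =
               (\<lambda>x. hmul n t (hT (sref j)) (Psi n t (scol j F # scol j E # T0 n mu)) x
                    + (1 - t) * Psi n t (F # scol j E # T0 n mu) x))"
    proof (cases "T0 n mu")
      case Nil
      then show ?thesis using part2[OF E F j cle_down[OF E j ja]] by simp
    next
      case (Cons D S)
      define m1 where "m1 = card {i. i < n \<and> 1 \<le> mu ! i}"
      have D: "D = [1..<Suc m1]" using T0_hd[OF Cons] unfolding m1_def .
      have "length D \<le> length E \<and> (\<forall>r < length D. E ! r \<le> D ! r)"
        using ss Cons unfolding semistandard_def by (metis Suc_less_eq length_Cons nth_Cons_0 nth_Cons_Suc zero_less_Suc)
      then have ssD: "m1 \<le> length E" "\<And>r. r < m1 \<Longrightarrow> E ! r \<le> Suc r" unfolding D by (auto simp del: upt_Suc)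
      have inE: "\<And>r. r < m1 \<Longrightarrow> Suc r \<in> set E"
      proof -
        fix r assume r: "r < m1"
        have rl: "r < length E" using r ssD(1) by simp
        have "Suc r \<le> E ! r" using E_ge[OF cols_facts(1)[OF E] cols_facts(4)[OF E] rl] .
        then have "E ! r = Suc r" using ssD(2)[OF r] by simp
        then show "Suc r \<in> set E" using nth_mem[OF rl] by simp
      qed
      have m1j: "m1 < j"
      proof (rule ccontr)
        assume "\<not> m1 < j"
        then have "j - 1 < m1" using j by simp
        then have "Suc (j - 1) \<in> set E" by (rule inE)
        then show False using ja j by simp
      qed
      have colsT: "\<And>C. C \<in> set (T0 n mu) \<Longrightarrow> C \<in> cols n (length C) \<and> scol j C = C"
      proof -
        fix C assume "C \<in> set (T0 n mu)"
        then obtain m where m: "C = [1..<Suc m]" "m \<le> m1" "m \<le> n" using T0_col unfolding m1_def by blast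
        have Cc: "C \<in> cols n m" unfolding m(1) by (rule upt_cols[OF m(3)])
        have "j \<notin> set C" "Suc j \<notin> set C" using m m1j by (auto simp del: upt_Suc)
        then have "scol j C = C" using scol_fix[OF Cc j] by simp
        moreover have "length C = m" using m by simp
        ultimately show "C \<in> cols n (length C) \<and> scol j C = C" using Cc by simp
      qed
      have okT: "okcols n (D # S)" using colsT Cons unfolding okcols_def by simp
      have fx: "\<forall>C\<in>set (D # S). scol j C = C" using colsT Cons by simp
      have T: "Lop t j (Psi n t (D # S)) = (\<lambda>x. t * Psi n t (D # S) x)"
        by (rule fixed_HH_list[OF okT j ti fx])
      have H: "HH t j (Psi n t (E # D # S)) (Psi n t (scol j E # D # S))"
        by (rule step_HH[OF E j ti ja okT T])
      have ok1: "okcols n (E # D # S)" using okT cols_facts(3)[OF E] E unfolding okcols_def by simp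
      have E': "scol j E \<in> cols n a" using scol_facts(1)[OF E j] .
      have ok2: "okcols n (scol j E # D # S)" using okT cols_facts(3)[OF E'] E' unfolding okcols_def by simp
      show ?thesis using top[OF F j ti ok1 ok2 H] Cons by simp
    qed
    show "cle (scol j F) F \<Longrightarrow> Psi n t (F # E # T0 n mu) =
               (\<lambda>x. t * hmul n t (hinv n t (hT (sref j)))
                          (Psi n t (scol j F # scol j E # T0 n mu)) x)" using goal by blast
    show "cle F (scol j F) \<Longrightarrow> Psi n t (F # E # T0 n mu) =
               (\<lambda>x. hmul n t (hT (sref j)) (Psi n t (scol j F # scol j E # T0 n mu)) x
                    + (1 - t) * Psi n t (F # scol j E # T0 n mu) x)" using goal by blast
  qed
qed


end
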